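(* Let $t\geqslant 2$, $r\in\{2t,2t+1\}$ and $n\geqslant 2r-1$. Let $I^\ell$ be as follows. If $\ell=2s-1$ with $2\leqslant s\leqslant r$, then $I^\ell\in\mathrm{Sym}_n$ has as non-trivial cycles one $\ell$-cycle and $r-s$ transpositions. If $\ell=2s$ with $2\leqslant s\leqslant r-2$, then $I^\ell$ has as non-trivial cycles one $\ell$-cycle, one $3$-cycle and $r-s-2$ transpositions. Then $|B_r(I^\ell)\cap B_r(I_n)|=|N_1(I^\ell)|+|N_2(I^\ell)|+|N_3(I^\ell)|$, and this quantity equals: for $\ell=2s-1$: $$\begin{cases}2\binom{r-s}{t}+\ell\sum_{i=1}^{s-1}\binom{r-s}{t-i}, & r=2t,\\[2pt] 2\binom{r-s}{t}+\ell\sum_{i=1}^{s-2}\binom{r-s}{t-i}, & r=2t+1;\end{cases}$$ for $\ell=2s$: $$\begin{cases}2\binom{r-s}{t}+2(\ell+1)\binom{r-s-2}{t-1}+\ell\sum_{i=1}^{s-2}\binom{r-s-1}{t-i-1}, & r=2t,\\[2pt] 2\binom{r-s-1}{t}+\ell\sum_{i=1}^{s-1}\binom{r-s-1}{t-i}, & r=2t+1.\end{cases}$$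
   Context: $\mathrm{Sym}_n$ is the symmetric group on $[n]$, $I_n$ is the identity, the Hamming distance is $d(\pi,\tau)=|\{i:\pi(i)\neq\tau(i)\}|$, $w_H(\pi)=d(I_n,\pi)$, and $B_r(\pi)=\{\sigma:d(\sigma,\pi)\leqslant r\}$. $Tc(\pi)=\{(i,\pi(i)):\pi(i)\neq i\}$. For $\pi$ with $w_H(\pi)=2r-1$: $N_1(\pi)=\{\sigma:Tc(\sigma)\subseteq Tc(\pi),|Tc(\sigma)|=r-1\}$, $N_2(\pi)=\{\sigma:Tc(\sigma)\subseteq Tc(\pi),|Tc(\sigma)|=r\}$, and $N_3(\pi)=\{\sigma:|Tc(\sigma)\cap Tc(\pi)|=r-1,|Tc(\sigma)|=r\}$. Binomial convention: $\binom{0}{0}=1$ and $\binom{p}{q}=0$ if $p<q$, $p<0$ or $q<0$. Empty sums are $0$. *)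

theory Defs
  imports "HOL-Combinatorics.Combinatorics" "HOL-Library.Multiset"
begin

definition Sym :: "nat \<Rightarrow> (nat \<Rightarrow> nat) set" where
  "Sym n = {p. p permutes {1..n}}"

definition hdist :: "nat \<Rightarrow> (nat \<Rightarrow> nat) \<Rightarrow> (nat \<Rightarrow> nat) \<Rightarrow> nat" where
  "hdist n p q = card {i \<in> {1..n}. p i \<noteq> q i}"

definition wH :: "nat \<Rightarrow> (nat \<Rightarrow> nat) \<Rightarrow> nat" where
  "wH n p = hdist n id p"

definition ball_r :: "nat \<Rightarrow> nat \<Rightarrow> (nat \<Rightarrow> nat) \<Rightarrow> (nat \<Rightarrow> nat) set" where
  "ball_r n r p = {\<sigma> \<in> Sym n. hdist n \<sigma> p \<le> r}"

definition Tc :: "nat \<Rightarrow> (nat \<Rightarrow> nat) \<Rightarrow> (nat \<times> nat) set" where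
  "Tc n p = {(i, p i) | i. i \<in> {1..n} \<and> p i \<noteq> i}"

definition N1 :: "nat \<Rightarrow> nat \<Rightarrow> (nat \<Rightarrow> nat) \<Rightarrow> (nat \<Rightarrow> nat) set" where
  "N1 n r p = {\<sigma> \<in> Sym n. Tc n \<sigma> \<subseteq> Tc n p \<and> card (Tc n \<sigma>) = r - 1}"

definition N2 :: "nat \<Rightarrow> nat \<Rightarrow> (nat \<Rightarrow> nat) \<Rightarrow> (nat \<Rightarrow> nat) set" where
  "N2 n r p = {\<sigma> \<in> Sym n. Tc n \<sigma> \<subseteq> Tc n p \<and> card (Tc n \<sigma>) = r}"

definition N3 :: "nat \<Rightarrow> nat \<Rightarrow> (nat \<Rightarrow> nat) \<Rightarrow> (nat \<Rightarrow> nat) set" where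
  "N3 n r p = {\<sigma> \<in> Sym n. card (Tc n \<sigma> \<inter> Tc n p) = r - 1 \<and> card (Tc n \<sigma>) = r}"

definition nontriv_cycles :: "nat \<Rightarrow> (nat \<Rightarrow> nat) \<Rightarrow> nat set set" where
  "nontriv_cycles n p = {orbit p x | x. x \<in> {1..n} \<and> p x \<noteq> x}"

definition cycle_type :: "nat \<Rightarrow> (nat \<Rightarrow> nat) \<Rightarrow> nat multiset" where
  "cycle_type n p = image_mset card (mset_set (nontriv_cycles n p))"

definition bnm :: "int \<Rightarrow> int \<Rightarrow> nat" where
  "bnm p q = (if p < 0 \<or> q < 0 \<or> p < q then 0 else nat p choose nat q)"

end

theory Submission imports Defs begin

lemma perm_from_inj:
  assumes "finite X" "inj_on f X" "f ` X \<subseteq> X" "\<And>y. y \<notin> X \<Longrightarrow> f y = y"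
  shows "f permutes X"
proof (rule bij_imp_permutes)
  show "bij_betw f X X" using assms endo_inj_surj unfolding bij_betw_def by blast
qed (use assms in auto)

locale pctx =
  fixes n :: nat and p :: "nat \<Rightarrow> nat"
  assumes perm: "p permutes {1..n}"
begin

definition "S = {x. p x \<noteq> x}"
definition "Cs = nontriv_cycles n p"

lemma S_sub: "S \<subseteq> {1..n}"
  using perm by (auto simp: S_def permutes_def)
lemma finS: "finite S" using S_sub finite_subset by blast
lemma permutation: "permutation p" using perm by (auto simp: permutation_permutes)
lemma self_orb: "x \<in> orbit p x" by (rule permutation_self_in_orbit[OF permutation])
lemma p_inj: "p a = p b \<longleftrightarrow> a = b"
  using perm permutes_inj unfolding inj_def by metis
lemma S_step: "x \<in> S \<Longrightarrow> p x \<in> S"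
  unfolding S_def using p_inj by auto
lemma orb_S: "x \<in> S \<Longrightarrow> orbit p x \<subseteq> S"
proof
  fix y assume "x \<in> S" "y \<in> orbit p x"
  then show "y \<in> S" by (induct rule: orbit.induct[OF \<open>y \<in> orbit p x\<close>]) (auto intro: S_step)
qed
lemma Cs_alt: "Cs = (\<lambda>x. orbit p x) ` S"
proof
  show "Cs \<subseteq> (\<lambda>x. orbit p x) ` S" unfolding Cs_def nontriv_cycles_def S_def by blast
  show "(\<lambda>x. orbit p x) ` S \<subseteq> Cs"
  proof
    fix D assume "D \<in> (\<lambda>x. orbit p x) ` S"
    then obtain x where x: "x \<in> S" "D = orbit p x" by blast
    then have "x \<in> {1..n}" "p x \<noteq> x" using S_sub by (auto simp: S_def)
    then show "D \<in> Cs" unfolding Cs_def nontriv_cycles_def using x(2) by blast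
  qed
qed
lemma finCs: "finite Cs" using Cs_alt finS by simp
lemma cyclic: "cyclic_on p (orbit p x)" by (rule cyclic_on_orbit'[OF permutation])
lemma cyc: "D \<in> Cs \<Longrightarrow> y \<in> D \<Longrightarrow> D = orbit p y"
proof -
  assume "D \<in> Cs" "y \<in> D"
  then obtain x where "D = orbit p x" unfolding Cs_alt by blast
  then show ?thesis using orbit_cyclic_eq3[OF cyclic \<open>y \<in> D\<close>[unfolded \<open>D = _\<close>]] by simp
qed
lemma Cs_sub: "D \<in> Cs \<Longrightarrow> D \<subseteq> S" unfolding Cs_alt using orb_S by blast
lemma Cs_ne: "D \<in> Cs \<Longrightarrow> D \<noteq> {}" unfolding Cs_alt using self_orb by blast
lemma Cs_fin: "D \<in> Cs \<Longrightarrow> finite D" using Cs_sub finS finite_subset by blast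
lemma Cs_step: "D \<in> Cs \<Longrightarrow> p y \<in> D \<longleftrightarrow> y \<in> D"
proof -
  assume "D \<in> Cs"
  then obtain x where d: "D = orbit p x" unfolding Cs_alt by blast
  show ?thesis unfolding d
    using cyclic_on_inI[OF cyclic, of y x] cyclic_on_f_in[OF perm cyclic, of y x] by blast
qed
lemma Cs_disj: "D1 \<in> Cs \<Longrightarrow> D2 \<in> Cs \<Longrightarrow> y \<in> D1 \<Longrightarrow> y \<in> D2 \<Longrightarrow> D1 = D2"
proof -
  assume "D1 \<in> Cs" "D2 \<in> Cs" "y \<in> D1" "y \<in> D2"
  then show ?thesis using cyc[of D1 y] cyc[of D2 y] by simp
qed
lemma Union_Cs: "\<Union>Cs = S" unfolding Cs_alt using orb_S self_orb by auto
lemma orb_Cs: "x \<in> S \<Longrightarrow> orbit p x \<in> Cs" unfolding Cs_alt by auto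

lemma sum_card_Cs: "(\<Sum>D\<in>Cs. card D) = card S"
proof -
  have "card (\<Union>Cs) = sum card Cs"
    by (rule card_Union_disjoint) (auto simp: pairwise_def disjnt_def Cs_fin dest: Cs_disj)
  then show ?thesis using Union_Cs by simp
qed

lemma card_Union_sub: "F \<subseteq> Cs \<Longrightarrow> card (\<Union>F) = (\<Sum>D\<in>F. card D)"
  by (rule card_Union_disjoint) (auto simp: pairwise_def disjnt_def Cs_fin dest: Cs_disj)

definition "lc x = card (orbit p x)"

lemma orb_facts: "orbit p x = (\<lambda>i. (p^^i) x) ` {..<lc x} \<and> inj_on (\<lambda>i. (p^^i) x) {..<lc x} \<and> (p^^(lc x)) x = x"
proof -
  define d where "d = funpow_dist1 p x x"
  have e: "orbit p x = (\<lambda>i. (p^^i) x) ` {..<d}"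
    using orbit_conv_funpow_dist1[OF self_orb] unfolding d_def atLeast0LessThan .
  have i: "inj_on (\<lambda>i. (p^^i) x) {..<d}" using inj_on_funpow_dist1[OF self_orb] unfolding d_def atLeast0LessThan .
  have pr: "(p^^d) x = x" unfolding d_def by (rule funpow_dist1_prop[OF self_orb])
  have "lc x = d" unfolding lc_def e using card_image[OF i] by simp
  then show ?thesis using e i pr by (simp only:)
qed

lemma orb_enum: "orbit p x = (\<lambda>i. (p^^i) x) ` {..<lc x}" using orb_facts by blast
lemma orb_inj: "inj_on (\<lambda>i. (p^^i) x) {..<lc x}" using orb_facts by blast
lemma orb_per: "(p^^(lc x)) x = x" using orb_facts by blast
lemma lc_pos: "lc x > 0" unfolding lc_def
  by (rule card_gt_0_iff[THEN iffD2]) (use self_orb finite_orbit[OF self_orb] in blast)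

lemma funpow_orb: "(p^^i) x \<in> orbit p x"
  using funpow_in_orbit[OF self_orb] .

lemma lc_ge2: "x \<in> S \<Longrightarrow> lc x \<ge> 2"
proof -
  assume "x \<in> S"
  then have a: "x \<in> orbit p x" "p x \<in> orbit p x" "p x \<noteq> x" using self_orb orbit.base by (auto simp: S_def)
  have "{x, p x} \<subseteq> orbit p x" using a by blast
  then have "card {x, p x} \<le> lc x" unfolding lc_def
    by (rule card_mono[OF finite_orbit[OF self_orb]])
  then show ?thesis using a(3) by simp
qed

lemma funpow_mod: "(p^^i) x = (p^^(i mod lc x)) x"
  by (rule funpow_mod_eq[OF orb_per, symmetric])


end

definition "mv \<sigma> = {i. \<sigma> i \<noteq> i}"

lemma mv_perm: "p permutes {1..n} \<Longrightarrow> mv p \<subseteq> {1..n}"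
  unfolding mv_def permutes_def by auto

lemma Tc_eq: "\<sigma> permutes {1..n} \<Longrightarrow> Tc n \<sigma> = (\<lambda>i. (i, \<sigma> i)) ` mv \<sigma>"
  using mv_perm[of \<sigma> n] unfolding Tc_def mv_def by auto

lemma inj_graph: "inj_on (\<lambda>i. (i, f i)) X" by (auto intro: inj_onI)

lemma card_Tc: "\<sigma> permutes {1..n} \<Longrightarrow> card (Tc n \<sigma>) = card (mv \<sigma>)"
  by (subst Tc_eq) (assumption, rule card_image[OF inj_graph])

lemma Tc_inter: "\<sigma> permutes {1..n} \<Longrightarrow> Tc n \<sigma> \<inter> Tc n q = (\<lambda>i. (i, \<sigma> i)) ` {i \<in> mv \<sigma>. q i = \<sigma> i}"
proof -
  assume a: "\<sigma> permutes {1..n}"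
  have "Tc n \<sigma> \<inter> Tc n q = {(i, \<sigma> i) | i. i \<in> {1..n} \<and> \<sigma> i \<noteq> i \<and> q i = \<sigma> i}"
    unfolding Tc_def by auto
  also have "\<dots> = (\<lambda>i. (i, \<sigma> i)) ` {i \<in> mv \<sigma>. q i = \<sigma> i}"
    using mv_perm[OF a] unfolding mv_def by blast
  finally show ?thesis .
qed

lemma card_Tc_inter: "\<sigma> permutes {1..n} \<Longrightarrow> card (Tc n \<sigma> \<inter> Tc n q) = card {i \<in> mv \<sigma>. q i = \<sigma> i}"
  by (subst Tc_inter) (assumption, rule card_image[OF inj_graph])

lemma Tc_sub: "\<sigma> permutes {1..n} \<Longrightarrow> Tc n \<sigma> \<subseteq> Tc n q \<longleftrightarrow> (\<forall>i\<in>mv \<sigma>. q i = \<sigma> i)"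
proof -
  assume a: "\<sigma> permutes {1..n}"
  have "Tc n \<sigma> \<subseteq> Tc n q \<longleftrightarrow> Tc n \<sigma> \<inter> Tc n q = Tc n \<sigma>" by blast
  also have "\<dots> \<longleftrightarrow> (\<lambda>i. (i, \<sigma> i)) ` {i \<in> mv \<sigma>. q i = \<sigma> i} = (\<lambda>i. (i, \<sigma> i)) ` mv \<sigma>"
    by (subst Tc_inter[OF a], subst Tc_eq[OF a], rule refl)
  also have "\<dots> \<longleftrightarrow> {i \<in> mv \<sigma>. q i = \<sigma> i} = mv \<sigma>"
    by (rule inj_on_image_eq_iff[OF inj_graph]) auto
  also have "\<dots> \<longleftrightarrow> (\<forall>i\<in>mv \<sigma>. q i = \<sigma> i)" by blast
  finally show ?thesis .
qed

context pctx begin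

lemma three_case:
  assumes s: "\<sigma> permutes {1..n}" and c: "card {i \<in> mv \<sigma>. p i = \<sigma> i} + 1 = card (mv \<sigma>)"
  shows "mv \<sigma> \<subseteq> S"
proof -
  let ?A = "mv \<sigma>" and ?E = "{i \<in> mv \<sigma>. p i = \<sigma> i}"
  have fA: "finite ?A" using mv_perm[OF s] finite_subset by blast
  have "card (?A - ?E) = 1" using c card_Diff_subset[OF finite_subset[OF _ fA], of ?E] by auto
  then obtain j where j: "?A - ?E = {j}" by (auto simp: card_Suc_eq)
  have ES: "?E \<subseteq> S" by (auto simp: S_def mv_def)
  obtain z where z: "\<sigma> z = j" using permutes_surj[OF s] by (metis surj_def)
  have jA: "j \<in> ?A" using j by blast
  then have "z \<noteq> j" using z by (auto simp: mv_def)
  then have "z \<in> ?A" using z by (auto simp: mv_def)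
  then have "z \<in> ?E" using j \<open>z \<noteq> j\<close> by blast
  then have "p z = j" using z by simp
  have "j \<in> S"
  proof (rule ccontr)
    assume "j \<notin> S" then have "p j = j" by (simp add: S_def)
    then have "p z = p j" using \<open>p z = j\<close> by simp
    then show False using \<open>z \<noteq> j\<close> by (simp add: p_inj)
  qed
  moreover have "?A \<subseteq> ?E \<union> {j}" using j by blast
  ultimately show ?thesis using ES by blast
qed

lemma hd_id: "\<sigma> permutes {1..n} \<Longrightarrow> hdist n \<sigma> id = card (mv \<sigma>)"
  unfolding hdist_def using mv_perm[of \<sigma> n] by (intro arg_cong[where f=card]) (auto simp: mv_def)

lemma hd_p:
  assumes s: "\<sigma> permutes {1..n}"
  shows "hdist n \<sigma> p + card {i \<in> mv \<sigma>. p i = \<sigma> i} = card S + card (mv \<sigma> - S)"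
proof -
  let ?A = "mv \<sigma>" and ?E = "{i \<in> mv \<sigma>. p i = \<sigma> i}"
  have fA: "finite ?A" using mv_perm[OF s] finite_subset by blast
  have ES: "?E \<subseteq> S" by (auto simp: S_def mv_def)
  have D: "{i \<in> {1..n}. \<sigma> i \<noteq> p i} = (S - ?E) \<union> (?A - S)"
    using S_sub mv_perm[OF s] by (auto simp: S_def mv_def)
  have "hdist n \<sigma> p = card (S - ?E) + card (?A - S)"
    unfolding hdist_def D by (rule card_Un_disjoint) (use finS fA in auto)
  moreover have "card (S - ?E) + card ?E = card S"
    using card_Diff_subset[OF finite_subset[OF ES finS] ES] card_mono[OF finS ES] by simp
  ultimately show ?thesis by simp
qed

lemma EA_bound:
  assumes s: "\<sigma> permutes {1..n}"
  shows "card {i \<in> mv \<sigma>. p i = \<sigma> i} + card (mv \<sigma> - S) \<le> card (mv \<sigma>)"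
proof -
  let ?A = "mv \<sigma>" and ?E = "{i \<in> mv \<sigma>. p i = \<sigma> i}"
  have fA: "finite ?A" using mv_perm[OF s] finite_subset by blast
  have ES: "?E \<subseteq> S" by (auto simp: S_def mv_def)
  have "card (?E \<union> (?A - S)) = card ?E + card (?A - S)"
    by (rule card_Un_disjoint) (use fA ES in auto)
  moreover have "card (?E \<union> (?A - S)) \<le> card ?A" by (rule card_mono[OF fA]) auto
  ultimately show ?thesis by simp
qed

lemma part1:
  assumes cS: "card S = 2*r - 1" and r: "r \<ge> 1"
  shows "card (ball_r n r p \<inter> ball_r n r id) = card (N1 n r p) + card (N2 n r p) + card (N3 n r p)"
proof -
  have eq: "ball_r n r p \<inter> ball_r n r id = N1 n r p \<union> N2 n r p \<union> N3 n r p"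
  proof (rule set_eqI)
    fix \<sigma>
    show "\<sigma> \<in> ball_r n r p \<inter> ball_r n r id \<longleftrightarrow> \<sigma> \<in> N1 n r p \<union> N2 n r p \<union> N3 n r p"
    proof (cases "\<sigma> \<in> Sym n")
      case False then show ?thesis by (auto simp: ball_r_def N1_def N2_def N3_def)
    next
      case True
      then have s: "\<sigma> permutes {1..n}" by (simp add: Sym_def)
      let ?A = "mv \<sigma>" and ?E = "{i \<in> mv \<sigma>. p i = \<sigma> i}"
      have fA: "finite ?A" using mv_perm[OF s] finite_subset by blast
      have EA: "card ?E \<le> card ?A" by (rule card_mono[OF fA]) auto
      note h1 = hd_p[OF s] and h2 = EA_bound[OF s]
      have sub: "Tc n \<sigma> \<subseteq> Tc n p \<longleftrightarrow> card ?E = card ?A"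
      proof -
        have "(\<forall>i\<in>?A. p i = \<sigma> i) \<longleftrightarrow> ?E = ?A" by auto
        also have "\<dots> \<longleftrightarrow> card ?E = card ?A"
          using card_subset_eq[OF fA, of ?E] by auto
        finally show ?thesis using Tc_sub[OF s] by simp
      qed
      have ct: "card (Tc n \<sigma>) = card ?A" by (rule card_Tc[OF s])
      have ci: "card (Tc n \<sigma> \<inter> Tc n p) = card ?E" by (rule card_Tc_inter[OF s])
      have three: "card ?E + 1 = card ?A \<Longrightarrow> card (?A - S) = 0"
      proof -
        assume h: "card ?E + 1 = card ?A"
        have "?A - S = {}" using three_case[OF s h] by blast
        then show ?thesis by (metis card.empty)
      qed
      have L: "\<sigma> \<in> ball_r n r p \<inter> ball_r n r id \<longleftrightarrow> hdist n \<sigma> p \<le> r \<and> card ?A \<le> r"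
        using True hd_id[OF s] by (auto simp: ball_r_def)
      have R: "\<sigma> \<in> N1 n r p \<union> N2 n r p \<union> N3 n r p \<longleftrightarrow>
          (card ?E = card ?A \<and> card ?A = r - 1) \<or> (card ?E = card ?A \<and> card ?A = r) \<or>
          (card ?E = r - 1 \<and> card ?A = r)"
        using True sub ct ci by (auto simp: N1_def N2_def N3_def)
      show ?thesis unfolding L R using h1 h2 three cS r EA by auto
    qed
  qed
  have fin: "finite (Sym n)" unfolding Sym_def by (rule finite_permutations) simp
  have d12: "N1 n r p \<inter> N2 n r p = {}" using r by (auto simp: N1_def N2_def)
  have d3: "(N1 n r p \<union> N2 n r p) \<inter> N3 n r p = {}"
  proof -
    { fix \<sigma> assume a: "\<sigma> \<in> N2 n r p" "\<sigma> \<in> N3 n r p"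
      then have "Tc n \<sigma> \<inter> Tc n p = Tc n \<sigma>" by (auto simp: N2_def)
      then have False using a r by (auto simp: N2_def N3_def) }
    then show ?thesis using r by (auto simp: N1_def N3_def)
  qed
  have f: "finite (N1 n r p)" "finite (N2 n r p)" "finite (N3 n r p)"
    using fin by (auto simp: N1_def N2_def N3_def)
  show ?thesis unfolding eq
    by (simp add: card_Un_disjoint f d12 d3)
qed

end

context pctx begin

definition "Cl = {U. U \<subseteq> S \<and> p ` U \<subseteq> U}"
definition "rst U = (\<lambda>y. if y \<in> U then p y else y)"

lemma Cl_fin: "U \<in> Cl \<Longrightarrow> finite U" unfolding Cl_def using finS finite_subset by blast

lemma Cl_inv: "U \<in> Cl \<Longrightarrow> p y \<in> U \<longleftrightarrow> y \<in> U"
proof -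
  assume u: "U \<in> Cl"
  have ij: "inj_on p U" using permutes_inj[OF perm] by (rule inj_on_subset) simp
  have img: "p ` U = U"
    using endo_inj_surj[OF Cl_fin[OF u] _ ij] u unfolding Cl_def by blast
  show ?thesis
  proof
    assume "p y \<in> U"
    then obtain z where "z \<in> U" "p y = p z" using img by (metis imageE)
    then show "y \<in> U" by (simp add: p_inj)
  next
    assume "y \<in> U" then show "p y \<in> U" using u unfolding Cl_def by blast
  qed
qed

lemma orbit_in_closed:
  assumes "p ` U \<subseteq> U" "y \<in> U" shows "orbit p y \<subseteq> U"
proof
  fix z assume "z \<in> orbit p y"
  then show "z \<in> U" by (induct rule: orbit.induct) (use assms in blast)+
qed

lemma p_in: "y \<in> {1..n} \<Longrightarrow> p y \<in> {1..n}"
  using permutes_in_image[OF perm] by blast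

lemma rst_perm: "U \<in> Cl \<Longrightarrow> rst U permutes {1..n}"
proof (rule perm_from_inj)
  assume u: "U \<in> Cl"
  have US: "U \<subseteq> {1..n}" using u S_sub unfolding Cl_def by blast
  show "finite {1..n}" by simp
  show "inj_on (rst U) {1..n}"
  proof (rule inj_onI)
    fix a b assume "rst U a = rst U b"
    then show "a = b" using Cl_inv[OF u, of a] Cl_inv[OF u, of b] unfolding rst_def
      by (auto split: if_splits simp: p_inj)
  qed
  show "rst U ` {1..n} \<subseteq> {1..n}" unfolding rst_def using p_in by auto
  fix y assume "y \<notin> {1..n}" then show "rst U y = y" using US unfolding rst_def by auto
qed

lemma mv_rst: "U \<in> Cl \<Longrightarrow> mv (rst U) = U"
  unfolding mv_def rst_def Cl_def S_def by auto

lemma rst_agree: "U \<in> Cl \<Longrightarrow> \<forall>i\<in>mv (rst U). p i = rst U i"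
  using mv_rst unfolding rst_def by auto

lemma G_char:
  assumes s: "\<sigma> permutes {1..n}" and ag: "\<forall>i\<in>mv \<sigma>. p i = \<sigma> i"
  shows "mv \<sigma> \<in> Cl" "\<sigma> = rst (mv \<sigma>)"
proof -
  have i: "\<sigma> a = \<sigma> b \<longleftrightarrow> a = b" for a b using permutes_inj[OF s] unfolding inj_def by metis
  have "mv \<sigma> \<subseteq> S" using ag unfolding mv_def S_def by auto
  moreover have "p ` mv \<sigma> \<subseteq> mv \<sigma>"
  proof
    fix z assume "z \<in> p ` mv \<sigma>"
    then obtain y where y: "y \<in> mv \<sigma>" "z = p y" by blast
    then have "z = \<sigma> y" using ag by simp
    moreover have "\<sigma> (\<sigma> y) \<noteq> \<sigma> y" using y(1) i unfolding mv_def by simp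
    ultimately show "z \<in> mv \<sigma>" unfolding mv_def by simp
  qed
  ultimately show "mv \<sigma> \<in> Cl" unfolding Cl_def by blast
  show "\<sigma> = rst (mv \<sigma>)"
  proof
    fix y show "\<sigma> y = rst (mv \<sigma>) y" using ag unfolding rst_def mv_def by auto
  qed
qed

lemma card_G:
  "card {\<sigma> \<in> Sym n. Tc n \<sigma> \<subseteq> Tc n p \<and> card (Tc n \<sigma>) = m} = card {U \<in> Cl. card U = m}"
proof -
  have "{\<sigma> \<in> Sym n. Tc n \<sigma> \<subseteq> Tc n p \<and> card (Tc n \<sigma>) = m} = rst ` {U \<in> Cl. card U = m}"
  proof (rule set_eqI, rule iffI)
    fix \<sigma> assume "\<sigma> \<in> {\<sigma> \<in> Sym n. Tc n \<sigma> \<subseteq> Tc n p \<and> card (Tc n \<sigma>) = m}"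
    then have s: "\<sigma> permutes {1..n}" and ag: "\<forall>i\<in>mv \<sigma>. p i = \<sigma> i" and c: "card (mv \<sigma>) = m"
      using Tc_sub card_Tc by (auto simp: Sym_def)
    show "\<sigma> \<in> rst ` {U \<in> Cl. card U = m}" using G_char[OF s ag] c by blast
  next
    fix \<sigma> assume "\<sigma> \<in> rst ` {U \<in> Cl. card U = m}"
    then obtain U where u: "U \<in> Cl" "card U = m" "\<sigma> = rst U" by blast
    have s: "\<sigma> permutes {1..n}" using rst_perm[OF u(1)] u(3) by simp
    show "\<sigma> \<in> {\<sigma> \<in> Sym n. Tc n \<sigma> \<subseteq> Tc n p \<and> card (Tc n \<sigma>) = m}"
      using s Tc_sub[OF s] card_Tc[OF s] rst_agree[OF u(1)] mv_rst[OF u(1)] u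
      by (auto simp: Sym_def)
  qed
  moreover have "inj_on rst {U \<in> Cl. card U = m}"
    by (rule inj_onI) (metis (no_types, lifting) mem_Collect_eq mv_rst)
  ultimately show ?thesis by (simp add: card_image)
qed

lemma Union_Cl: "F \<subseteq> Cs \<Longrightarrow> \<Union>F \<in> Cl"
  unfolding Cl_def using Cs_sub Cs_step by blast

lemma Union_inj: "inj_on Union (Pow Cs)"
proof (rule inj_onI)
  { fix F1 F2 assume f: "F1 \<subseteq> Cs" "F2 \<subseteq> Cs" "\<Union>F1 = \<Union>F2"
    have "F1 \<subseteq> F2"
    proof
      fix D assume "D \<in> F1"
      then obtain y where "y \<in> D" using Cs_ne f by blast
      then obtain D' where "D' \<in> F2" "y \<in> D'" using f \<open>D \<in> F1\<close> by blast
      then show "D \<in> F2" using Cs_disj[of D D' y] f \<open>D \<in> F1\<close> \<open>y \<in> D\<close> by blast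
    qed }
  note * = this
  fix F1 F2 assume "F1 \<in> Pow Cs" "F2 \<in> Pow Cs" "\<Union>F1 = \<Union>F2"
  then show "F1 = F2" using *[of F1 F2] *[of F2 F1] by auto
qed

lemma Cl_decomp:
  assumes u: "U \<in> Cl" and y: "Y \<subseteq> Cs" "U \<subseteq> \<Union>Y"
  shows "U = \<Union>{D \<in> Y. D \<subseteq> U}"
proof
  show "U \<subseteq> \<Union>{D \<in> Y. D \<subseteq> U}"
  proof
    fix z assume z: "z \<in> U"
    then obtain D where D: "D \<in> Y" "z \<in> D" using y by blast
    then have "D = orbit p z" using cyc y by blast
    moreover have "orbit p z \<subseteq> U" using orbit_in_closed u z unfolding Cl_def by blast
    ultimately show "z \<in> \<Union>{D \<in> Y. D \<subseteq> U}" using D by blast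
  qed
qed blast

lemma card_Cl_Pow:
  assumes Y: "Y \<subseteq> Cs"
  shows "card {U \<in> Cl. U \<subseteq> \<Union>Y \<and> P (card U)} = card {F. F \<subseteq> Y \<and> P (sum card F)}"
proof -
  have "{U \<in> Cl. U \<subseteq> \<Union>Y \<and> P (card U)} = Union ` {F. F \<subseteq> Y \<and> P (sum card F)}"
  proof (rule set_eqI, rule iffI)
    fix U assume "U \<in> {U \<in> Cl. U \<subseteq> \<Union>Y \<and> P (card U)}"
    then have u: "U \<in> Cl" "U \<subseteq> \<Union>Y" "P (card U)" by auto
    define F where "F = {D \<in> Y. D \<subseteq> U}"
    have "U = \<Union>F" unfolding F_def by (rule Cl_decomp[OF u(1) Y u(2)])
    moreover have "F \<subseteq> Y" unfolding F_def by blast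
    moreover have "card (\<Union>F) = sum card F" using card_Union_sub \<open>F \<subseteq> Y\<close> Y by blast
    ultimately show "U \<in> Union ` {F. F \<subseteq> Y \<and> P (sum card F)}" using u(3) by auto
  next
    fix U assume "U \<in> Union ` {F. F \<subseteq> Y \<and> P (sum card F)}"
    then obtain F where F: "F \<subseteq> Y" "P (sum card F)" "U = \<Union>F" by blast
    have "card (\<Union>F) = sum card F" using card_Union_sub F Y by blast
    then show "U \<in> {U \<in> Cl. U \<subseteq> \<Union>Y \<and> P (card U)}" using F Union_Cl[of F] Y by auto
  qed
  moreover have "inj_on Union {F. F \<subseteq> Y \<and> P (sum card F)}"
    by (rule inj_on_subset[OF Union_inj]) (use Y in auto)
  ultimately show ?thesis by (simp add: card_image)
qed

lemma card_N12:
  "card {\<sigma> \<in> Sym n. Tc n \<sigma> \<subseteq> Tc n p \<and> card (Tc n \<sigma>) = m} = card {F. F \<subseteq> Cs \<and> sum card F = m}"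
proof -
  have "{U \<in> Cl. card U = m} = {U \<in> Cl. U \<subseteq> \<Union>Cs \<and> card U = m}"
    using Union_Cs unfolding Cl_def by blast
  then show ?thesis using card_G card_Cl_Pow[of Cs "\<lambda>c. c = m"] by simp
qed

end

lemma suc_mod: "i < k \<Longrightarrow> Suc i mod k = (if Suc i = k then 0 else Suc i)"
  by (cases "Suc i = k") auto

context pctx begin

definition "seg x m = (\<lambda>i. (p^^i) x) ` {..<m}"
definition "phi x k U = (\<lambda>y. if y \<in> U then p y else if y \<in> seg x (k-1) then p y
    else if y = (p^^(k-1)) x then x else y)"

lemma pw_inj: "i < lc x \<Longrightarrow> j < lc x \<Longrightarrow> (p^^i) x = (p^^j) x \<longleftrightarrow> i = j"
  using orb_inj[of x] unfolding inj_on_def by blast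

lemma p_pw: "p ((p^^i) x) = (p^^(Suc i)) x" by simp

lemma seg_sub: "seg x m \<subseteq> orbit p x" unfolding seg_def using funpow_orb by blast

lemma card_seg: "m \<le> lc x \<Longrightarrow> card (seg x m) = m"
  unfolding seg_def by (subst card_image) (auto intro: inj_on_subset[OF orb_inj])

lemma seg_mem: "m \<le> lc x \<Longrightarrow> i < lc x \<Longrightarrow> (p^^i) x \<in> seg x m \<longleftrightarrow> i < m"
proof
  assume a: "m \<le> lc x" "i < lc x" "(p^^i) x \<in> seg x m"
  then obtain j where "j < m" "(p^^i) x = (p^^j) x" unfolding seg_def by blast
  then show "i < m" using pw_inj[of i x j] a by auto
qed (auto simp: seg_def)

lemma orb_elem: "y \<in> orbit p x \<Longrightarrow> \<exists>i < lc x. y = (p^^i) x"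
  using orb_enum[of x] by blast

lemma seg_Suc: "seg x (Suc m) = insert ((p^^m) x) (seg x m)"
  unfolding seg_def lessThan_Suc by simp

context
  fixes x k U
  assumes xS: "x \<in> S" and k2: "2 \<le> k" and kL: "k < lc x" and UCl: "U \<in> Cl"
    and Udisj: "U \<inter> orbit p x = {}"
begin

lemma modk: "m mod k < lc x"
proof -
  have "m mod k < k" using k2 by simp
  then show ?thesis using kL by linarith
qed

lemma phi_seg: "i < k \<Longrightarrow> phi x k U ((p^^i) x) = (p^^(Suc i mod k)) x"
proof -
  assume ik: "i < k"
  have nU: "(p^^i) x \<notin> U" using Udisj funpow_orb by blast
  show ?thesis
  proof (cases "i < k - 1")
    case True
    then have "(p^^i) x \<in> seg x (k-1)" unfolding seg_def by blast
    then show ?thesis using nU True unfolding phi_def by simp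
  next
    case False
    then have "i = k - 1" using ik by simp
    moreover have "(p^^i) x \<notin> seg x (k-1)" using seg_mem[of "k-1" x i] kL ik False by simp
    ultimately show ?thesis using nU k2 unfolding phi_def by auto
  qed
qed

lemma phi_U: "y \<in> U \<Longrightarrow> phi x k U y = p y" unfolding phi_def by simp

lemma phi_out: "y \<notin> U \<Longrightarrow> y \<notin> seg x k \<Longrightarrow> phi x k U y = y"
proof -
  assume a: "y \<notin> U" "y \<notin> seg x k"
  have "seg x k = insert ((p^^(k-1)) x) (seg x (k-1))" using seg_Suc[of x "k-1"] k2 by simp
  then show ?thesis using a unfolding phi_def by auto
qed

lemma US: "U \<subseteq> S" using UCl unfolding Cl_def by blast
lemma segS: "seg x m \<subseteq> S" using seg_sub orb_S[OF xS] by blast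

lemma phi_perm: "phi x k U permutes {1..n}"
proof (rule perm_from_inj)
  let ?s = "phi x k U"
  show "finite {1..n}" by simp
  have cls: "y \<in> seg x k \<Longrightarrow> ?s y \<in> seg x k" for y
  proof -
    assume "y \<in> seg x k"
    then obtain i where "i < k" "y = (p^^i) x" unfolding seg_def by blast
    then show ?thesis using phi_seg unfolding seg_def by auto
  qed
  have clU: "y \<in> U \<Longrightarrow> ?s y \<in> U" for y using phi_U UCl unfolding Cl_def by auto
  have Useg: "U \<inter> seg x k = {}" using Udisj seg_sub by blast
  have injseg: "y1 \<in> seg x k \<Longrightarrow> y2 \<in> seg x k \<Longrightarrow> ?s y1 = ?s y2 \<Longrightarrow> y1 = y2" for y1 y2
  proof -
    assume a: "y1 \<in> seg x k" "y2 \<in> seg x k" "?s y1 = ?s y2"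
    then obtain i j where ij: "i < k" "j < k" "y1 = (p^^i) x" "y2 = (p^^j) x" unfolding seg_def by blast
    then have "(p^^(Suc i mod k)) x = (p^^(Suc j mod k)) x" using a phi_seg by simp
    moreover have "Suc i mod k < lc x" "Suc j mod k < lc x" by (rule modk)+
    ultimately have "Suc i mod k = Suc j mod k" using pw_inj by blast
    then have "i = j" using ij(1,2) by (auto simp: suc_mod split: if_splits)
    then show "y1 = y2" using ij by simp
  qed
  show "inj_on ?s {1..n}"
  proof (rule inj_onI)
    fix y1 y2 assume a: "?s y1 = ?s y2" "y1 \<in> {1..n}" "y2 \<in> {1..n}"
    have cls2: "y \<notin> U \<Longrightarrow> y \<notin> seg x k \<Longrightarrow> ?s y \<notin> U \<and> ?s y \<notin> seg x k" for y
      using phi_out by simp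
    show "y1 = y2"
    proof (cases "y1 \<in> U")
      case True
      then have "?s y2 \<in> U" by (metis a(1) clU)
      then have "y2 \<in> U" using cls cls2 Useg by blast
      then show ?thesis using a True phi_U by (simp add: p_inj)
    next
      case n1: False
      show ?thesis
      proof (cases "y1 \<in> seg x k")
        case True
        then have "?s y2 \<in> seg x k" by (metis a(1) cls)
        then have "y2 \<in> seg x k" using clU cls2 Useg by blast
        then show ?thesis using injseg True a by blast
      next
        case False
        then have "?s y2 \<notin> U \<and> ?s y2 \<notin> seg x k" by (metis a(1) cls2 n1)
        then have "y2 \<notin> U" "y2 \<notin> seg x k" using clU cls by blast+
        then show ?thesis using a phi_out n1 False by simp
      qed
    qed
  qed
  show "?s ` {1..n} \<subseteq> {1..n}"
  proof
    fix z assume "z \<in> ?s ` {1..n}"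
    then obtain y where y: "y \<in> {1..n}" "z = ?s y" by blast
    show "z \<in> {1..n}"
    proof (cases "y \<in> U \<or> y \<in> seg x k")
      case True then have "z \<in> U \<or> z \<in> seg x k" using y clU cls by blast
      then show ?thesis using US segS S_sub by blast
    next
      case False then show ?thesis using y phi_out by simp
    qed
  qed
  fix y assume "y \<notin> {1..n}"
  then have "y \<notin> U" "y \<notin> seg x k" using US segS S_sub by blast+
  then show "?s y = y" by (rule phi_out)
qed

lemma phi_mv: "mv (phi x k U) = U \<union> seg x k"
proof (rule set_eqI)
  fix y
  show "y \<in> mv (phi x k U) \<longleftrightarrow> y \<in> U \<union> seg x k"
  proof (cases "y \<in> U")
    case True then show ?thesis using phi_U US unfolding mv_def S_def by auto
  next
    case nU: False
    show ?thesis
    proof (cases "y \<in> seg x k")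
      case True
      then obtain i where i: "i < k" "y = (p^^i) x" unfolding seg_def by blast
      have "Suc i mod k \<noteq> i" using i(1) k2 by (auto simp: suc_mod)
      moreover have "Suc i mod k < lc x" by (rule modk)
      moreover have "i < lc x" using kL i(1) by linarith
      ultimately have "(p^^(Suc i mod k)) x \<noteq> (p^^i) x" using pw_inj by blast
      then show ?thesis using True phi_seg[OF i(1)] i(2) unfolding mv_def by simp
    next
      case False then show ?thesis using nU phi_out unfolding mv_def by simp
    qed
  qed
qed

lemma phi_agree: "{i \<in> mv (phi x k U). p i = phi x k U i} = U \<union> seg x (k-1)"
proof (rule set_eqI)
  fix y
  have sk: "seg x k = insert ((p^^(k-1)) x) (seg x (k-1))" using seg_Suc[of x "k-1"] k2 by simp
  show "y \<in> {i \<in> mv (phi x k U). p i = phi x k U i} \<longleftrightarrow> y \<in> U \<union> seg x (k-1)"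
  proof (cases "y \<in> U")
    case True then show ?thesis using phi_U phi_mv by auto
  next
    case nU: False
    show ?thesis
    proof (cases "y \<in> seg x (k-1)")
      case True
      then obtain i where i: "i < k - 1" "y = (p^^i) x" unfolding seg_def by blast
      have "phi x k U y = p y" using phi_seg[of i] i by simp
      then show ?thesis using True sk phi_mv by auto
    next
      case False
      show ?thesis
      proof (cases "y = (p^^(k-1)) x")
        case True
        have "phi x k U y = x" using phi_seg[of "k-1"] True k2 by simp
        moreover have "p y = (p^^k) x"
        proof -
          have "Suc (k-1) = k" using k2 by simp
          then show ?thesis using True p_pw[of "k-1" x] by simp
        qed
        moreover have "(p^^k) x \<noteq> (p^^0) x" using pw_inj[of k x 0] kL k2 by simp
        ultimately show ?thesis using False nU by auto
      next
        case F2: False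
        then have "y \<notin> seg x k" using sk False by blast
        then show ?thesis using phi_mv nU \<open>y \<notin> seg x (k-1)\<close> by auto
      qed
    qed
  qed
qed

lemma phi_last: "(p^^(k-1)) x \<in> mv (phi x k U) \<and> (p^^(k-1)) x \<notin> U \<union> seg x (k-1) \<and> phi x k U ((p^^(k-1)) x) = x"
proof -
  have "(p^^(k-1)) x \<in> seg x k" unfolding seg_def using k2 by auto
  moreover have "(p^^(k-1)) x \<notin> U" using Udisj funpow_orb by blast
  moreover have "(p^^(k-1)) x \<notin> seg x (k-1)" using seg_mem[of "k-1" x "k-1"] kL by simp
  moreover have "phi x k U ((p^^(k-1)) x) = x" using phi_seg[of "k-1"] k2 by simp
  ultimately show ?thesis using phi_mv by blast
qed

lemma phi_cards: "card (mv (phi x k U)) = card U + k"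
  "card {i \<in> mv (phi x k U). p i = phi x k U i} + 1 = card U + k"
proof -
  have fU: "finite U" using Cl_fin UCl by blast
  have d: "U \<inter> seg x m = {}" for m using Udisj seg_sub by blast
  show "card (mv (phi x k U)) = card U + k" unfolding phi_mv
    by (subst card_Un_disjoint) (use fU d card_seg[of k x] kL in \<open>auto simp: seg_def\<close>)
  show "card {i \<in> mv (phi x k U). p i = phi x k U i} + 1 = card U + k" unfolding phi_agree
    by (subst card_Un_disjoint) (use fU d card_seg[of "k-1" x] kL k2 in \<open>auto simp: seg_def\<close>)
qed

end

end

context pctx begin

lemma N3_surj:
  assumes s: "\<sigma> permutes {1..n}" and c: "card {i \<in> mv \<sigma>. p i = \<sigma> i} + 1 = card (mv \<sigma>)"
  shows "\<exists>x k U. x \<in> S \<and> 2 \<le> k \<and> k < lc x \<and> U \<in> Cl \<and> U \<inter> orbit p x = {}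
           \<and> card U + k = card (mv \<sigma>) \<and> \<sigma> = phi x k U"
proof -
  define A where "A = mv \<sigma>"
  define E where "E = {i \<in> mv \<sigma>. p i = \<sigma> i}"
  have fA: "finite A" unfolding A_def using mv_perm[OF s] finite_subset by blast
  have AS: "A \<subseteq> S" unfolding A_def using three_case[OF s c] .
  have EsA: "E \<subseteq> A" unfolding E_def A_def by blast
  have "card (A - E) = 1" using c card_Diff_subset[OF finite_subset[OF EsA fA] EsA]
    unfolding A_def E_def by simp
  then obtain j where j: "A - E = {j}" by (auto simp: card_Suc_eq)
  have si: "\<sigma> a = \<sigma> b \<longleftrightarrow> a = b" for a b using permutes_inj[OF s] unfolding inj_def by metis
  have ssurj: "\<exists>z. \<sigma> z = y" for y using permutes_surj[OF s] by (metis surj_def)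
  have memA: "y \<in> A \<longleftrightarrow> \<sigma> y \<noteq> y" for y unfolding A_def mv_def by simp
  have memE: "y \<in> E \<longleftrightarrow> \<sigma> y \<noteq> y \<and> p y = \<sigma> y" for y unfolding E_def mv_def by simp
  define x where "x = \<sigma> j"
  have jA: "j \<in> A" "j \<notin> E" using j by blast+
  have xj: "x \<noteq> j" using jA memA x_def by simp
  have pjx: "p j \<noteq> x" using jA memA memE x_def by simp
  have xA: "x \<in> A" using memA si xj x_def by simp
  have Efw: "y \<in> E \<Longrightarrow> p y \<in> A" for y using memE memA si by metis
  have EA: "y \<in> A \<Longrightarrow> y \<noteq> j \<Longrightarrow> y \<in> E" for y using j by blast
  have bw: "y \<in> A \<Longrightarrow> y \<noteq> x \<Longrightarrow> \<exists>e\<in>E. p e = y" for y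
  proof -
    assume y: "y \<in> A" "y \<noteq> x"
    obtain z where z: "\<sigma> z = y" using ssurj by blast
    have "z \<in> A" using z y memA by (metis)
    moreover have "z \<noteq> j" using z y x_def by blast
    ultimately have "z \<in> E" using EA by blast
    then show ?thesis using z memE by blast
  qed
  have pj: "p j \<notin> A"
  proof
    assume "p j \<in> A"
    then obtain e where "e \<in> E" "p e = p j" using bw pjx by blast
    then show False using jA p_inj by metis
  qed
  have xnot: "e \<in> E \<Longrightarrow> p e \<noteq> x" for e
  proof
    assume "e \<in> E" "p e = x"
    then have "\<sigma> e = \<sigma> j" using memE x_def by simp
    then have "e = j" by (simp add: si)
    then show False using \<open>e \<in> E\<close> jA by blast
  qed
  define L where "L = lc x"
  have Lpos: "0 < L" unfolding L_def by (rule lc_pos)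
  have exj: "\<exists>i<L. (p^^i) x = j"
  proof (rule ccontr)
    assume nex: "\<not> (\<exists>i<L. (p^^i) x = j)"
    have all: "i < L \<Longrightarrow> (p^^i) x \<in> A" for i
    proof (induction i)
      case 0 then show ?case using xA by simp
    next
      case (Suc i)
      then have "(p^^i) x \<in> A" by simp
      moreover have "(p^^i) x \<noteq> j" using nex Suc.prems by simp
      ultimately have "(p^^i) x \<in> E" using EA by blast
      then show ?case using Efw by simp
    qed
    have "(p^^(L-1)) x \<in> E" using all[of "L-1"] Lpos nex EA by simp
    moreover have "p ((p^^(L-1)) x) = x"
    proof -
      have "Suc (L-1) = L" using Lpos by simp
      then show ?thesis using orb_per[of x] L_def p_pw[of "L-1" x] by simp
    qed
    ultimately show False using xnot by blast
  qed
  define d where "d = (LEAST i. (p^^i) x = j)"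
  obtain i0 where i0: "i0 < L" "(p^^i0) x = j" using exj by blast
  have dj: "(p^^d) x = j" unfolding d_def by (rule LeastI[of _ i0]) (rule i0(2))
  have "d \<le> i0" unfolding d_def by (rule Least_le) (rule i0(2))
  then have dL: "d < L" using i0 by linarith
  have dmin: "i < d \<Longrightarrow> (p^^i) x \<noteq> j" for i unfolding d_def using not_less_Least by blast
  have inA: "i \<le> d \<Longrightarrow> (p^^i) x \<in> A" for i
  proof (induction i)
    case 0 then show ?case using xA by simp
  next
    case (Suc i)
    then have "(p^^i) x \<in> A" by simp
    moreover have "(p^^i) x \<noteq> j" using dmin Suc.prems by simp
    ultimately have "(p^^i) x \<in> E" using EA by blast
    then show ?case using Efw by simp
  qed
  have d1: "1 \<le> d" using dj xj by (cases d) auto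
  have pjd: "(p^^(Suc d)) x = p j" using dj by simp
  have kL: "Suc d < L"
  proof -
    have "Suc d \<noteq> L" using pjd pj xA orb_per[of x] L_def by metis
    then show ?thesis using dL by simp
  qed
  have notA: "m < L \<Longrightarrow> d < m \<Longrightarrow> (p^^m) x \<notin> A" for m
  proof (induction m)
    case 0 then show ?case by simp
  next
    case (Suc m)
    show ?case
    proof (cases "m = d")
      case True then show ?thesis using pjd pj by simp
    next
      case False
      then have IH: "(p^^m) x \<notin> A" using Suc by simp
      show ?thesis
      proof
        assume a: "(p^^(Suc m)) x \<in> A"
        have "(p^^(Suc m)) x \<noteq> (p^^0) x" using pw_inj[of "Suc m" x 0] Suc.prems L_def by simp
        then obtain e where "e \<in> E" "p e = (p^^(Suc m)) x" using bw a by auto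
        then have "e = (p^^m) x" using p_inj by simp
        then show False using \<open>e \<in> E\<close> EsA IH by blast
      qed
    qed
  qed
  define C where "C = orbit p x"
  have xS: "x \<in> S" using xA AS by blast
  have CCs: "C \<in> Cs" unfolding C_def using orb_Cs[OF xS] .
  have AC: "A \<inter> C = seg x (Suc d)"
  proof
    show "A \<inter> C \<subseteq> seg x (Suc d)"
    proof
      fix y assume y: "y \<in> A \<inter> C"
      then obtain i where i: "i < L" "y = (p^^i) x" using orb_elem L_def C_def by blast
      have "i \<le> d" using notA i y by (meson IntD1 not_le)
      then show "y \<in> seg x (Suc d)" using i unfolding seg_def by auto
    qed
    show "seg x (Suc d) \<subseteq> A \<inter> C" unfolding seg_def C_def using inA funpow_orb by auto
  qed
  define U where "U = A - C"
  have jC: "j \<in> C" using dj funpow_orb C_def by metis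
  have UCl: "U \<in> Cl"
  proof -
    have "U \<subseteq> S" using AS U_def by blast
    moreover have "p ` U \<subseteq> U"
    proof
      fix z assume "z \<in> p ` U"
      then obtain y where y: "y \<in> U" "z = p y" by blast
      then have "y \<in> E" using EA jC U_def by blast
      then have "p y \<in> A" by (rule Efw)
      moreover have "p y \<notin> C" using Cs_step[OF CCs] y U_def by blast
      ultimately show "z \<in> U" using y U_def by blast
    qed
    ultimately show ?thesis unfolding Cl_def by blast
  qed
  have Udisj: "U \<inter> orbit p x = {}" unfolding U_def C_def by blast
  have AU: "A = U \<union> seg x (Suc d)" using AC U_def by blast
  have cardA: "card U + Suc d = card (mv \<sigma>)"
  proof -
    have "card A = card U + card (seg x (Suc d))"
      unfolding AU by (rule card_Un_disjoint) (use fA AU Udisj seg_sub in auto)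
    then show ?thesis using card_seg[of "Suc d" x] kL L_def A_def by simp
  qed
  have eq: "\<sigma> = phi x (Suc d) U"
  proof
    fix y
    have sS: "seg x (Suc d) = insert ((p^^d) x) (seg x d)" by (rule seg_Suc)
    show "\<sigma> y = phi x (Suc d) U y"
    proof (cases "y \<in> U")
      case True
      then have "y \<in> E" using EA jC U_def by blast
      then show ?thesis using True memE unfolding phi_def by simp
    next
      case nU: False
      show ?thesis
      proof (cases "y \<in> seg x d")
        case True
        then obtain i where i: "i < d" "y = (p^^i) x" unfolding seg_def by blast
        then have "y \<in> E" using EA inA dmin by simp
        then show ?thesis using True nU memE unfolding phi_def by simp
      next
        case nS: False
        show ?thesis
        proof (cases "y = (p^^d) x")
          case True then show ?thesis using nU nS dj x_def unfolding phi_def by simp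
        next
          case False
          then have "y \<notin> A" using AU sS nU nS by blast
          then show ?thesis using nU nS False memA unfolding phi_def by simp
        qed
      qed
    qed
  qed
  show ?thesis
    using xS d1 kL L_def UCl Udisj cardA eq by (intro exI[of _ x] exI[of _ "Suc d"] exI[of _ U]) auto
qed

lemma phi_inj:
  assumes h1: "x1 \<in> S" "2 \<le> k1" "k1 < lc x1" "U1 \<in> Cl" "U1 \<inter> orbit p x1 = {}"
      and h2: "x2 \<in> S" "2 \<le> k2" "k2 < lc x2" "U2 \<in> Cl" "U2 \<inter> orbit p x2 = {}"
      and e: "phi x1 k1 U1 = phi x2 k2 U2"
  shows "x1 = x2 \<and> k1 = k2 \<and> U1 = U2"
proof -
  define \<sigma> where "\<sigma> = phi x1 k1 U1"
  have \<sigma>2: "\<sigma> = phi x2 k2 U2" using e \<sigma>_def by simp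
  have key: "x \<in> S \<Longrightarrow> 2 \<le> k \<Longrightarrow> k < lc x \<Longrightarrow> U \<in> Cl \<Longrightarrow> U \<inter> orbit p x = {} \<Longrightarrow> \<sigma> = phi x k U \<Longrightarrow>
     mv \<sigma> - {i \<in> mv \<sigma>. p i = \<sigma> i} = {(p^^(k-1)) x} \<and> \<sigma> ((p^^(k-1)) x) = x
     \<and> mv \<sigma> \<inter> orbit p x = seg x k \<and> U = mv \<sigma> - orbit p x \<and> card (seg x k) = k" for x k U
  proof -
    assume a: "x \<in> S" "2 \<le> k" "k < lc x" "U \<in> Cl" "U \<inter> orbit p x = {}" "\<sigma> = phi x k U"
    have sk: "seg x k = insert ((p^^(k-1)) x) (seg x (k-1))" using seg_Suc[of x "k-1"] a(2) by simp
    have l: "(p^^(k-1)) x \<in> mv (phi x k U) \<and> (p^^(k-1)) x \<notin> U \<union> seg x (k-1) \<and> phi x k U ((p^^(k-1)) x) = x"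
      by (rule phi_last[OF a(1-5)])
    have m: "mv (phi x k U) = U \<union> seg x k" by (rule phi_mv[OF a(1-5)])
    have g: "{i \<in> mv (phi x k U). p i = phi x k U i} = U \<union> seg x (k-1)" by (rule phi_agree[OF a(1-5)])
    have ss: "seg x k \<subseteq> orbit p x" by (rule seg_sub)
    show ?thesis unfolding a(6) using l m g sk ss a(5) card_seg[of k x] a(3) by auto
  qed
  note k1 = key[OF h1 \<sigma>_def] and k2 = key[OF h2 \<sigma>2]
  have "(p^^(k1-1)) x1 = (p^^(k2-1)) x2" using k1 k2 by blast
  then have x: "x1 = x2" using k1 k2 by metis
  then have "k1 = k2" using k1 k2 by metis
  moreover have "U1 = U2" using k1 k2 x by metis
  ultimately show ?thesis using x by simp
qed

definition "T3 r = (SIGMA x:S. SIGMA k:{2..<lc x}. {U \<in> Cl. U \<inter> orbit p x = {} \<and> card U + k = r})"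

lemma N3_img:
  assumes r: "r \<ge> 1"
  shows "N3 n r p = (\<lambda>(x, k, U). phi x k U) ` T3 r" "inj_on (\<lambda>(x, k, U). phi x k U) (T3 r)"
proof -
  have memN3: "\<sigma> \<in> N3 n r p \<longleftrightarrow> \<sigma> permutes {1..n} \<and> card {i \<in> mv \<sigma>. p i = \<sigma> i} + 1 = card (mv \<sigma>)
      \<and> card (mv \<sigma>) = r" for \<sigma>
  proof (cases "\<sigma> permutes {1..n}")
    case True
    then show ?thesis using card_Tc[OF True] card_Tc_inter[OF True, of p] r
      unfolding N3_def Sym_def by auto
  next
    case False then show ?thesis unfolding N3_def Sym_def by auto
  qed
  show "N3 n r p = (\<lambda>(x, k, U). phi x k U) ` T3 r"
  proof (rule set_eqI, rule iffI)
    fix \<sigma> assume "\<sigma> \<in> N3 n r p"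
    then have a: "\<sigma> permutes {1..n}" "card {i \<in> mv \<sigma>. p i = \<sigma> i} + 1 = card (mv \<sigma>)" "card (mv \<sigma>) = r"
      using memN3 by auto
    obtain x k U where "x \<in> S \<and> 2 \<le> k \<and> k < lc x \<and> U \<in> Cl \<and> U \<inter> orbit p x = {}
           \<and> card U + k = card (mv \<sigma>) \<and> \<sigma> = phi x k U" using N3_surj[OF a(1,2)] by blast
    then show "\<sigma> \<in> (\<lambda>(x, k, U). phi x k U) ` T3 r" using a(3) unfolding T3_def
      by (intro image_eqI[of _ _ "(x, k, U)"]) auto
  next
    fix \<sigma> assume "\<sigma> \<in> (\<lambda>(x, k, U). phi x k U) ` T3 r"
    then obtain x k U where t: "x \<in> S" "2 \<le> k" "k < lc x" "U \<in> Cl" "U \<inter> orbit p x = {}"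
      "card U + k = r" "\<sigma> = phi x k U" unfolding T3_def by auto
    show "\<sigma> \<in> N3 n r p" unfolding memN3 t(7)
      using phi_perm[OF t(1-5)] phi_cards[OF t(1-5)] t(6) by simp
  qed
  show "inj_on (\<lambda>(x, k, U). phi x k U) (T3 r)"
  proof (rule inj_onI)
    fix a b assume "a \<in> T3 r" "b \<in> T3 r" "(\<lambda>(x, k, U). phi x k U) a = (\<lambda>(x, k, U). phi x k U) b"
    then show "a = b" unfolding T3_def using phi_inj by (auto simp del: atLeastLessThan_iff) (metis atLeastLessThan_iff)+
  qed
qed

end

context pctx begin

lemma sum_S_Cs: "(\<Sum>x\<in>S. g (orbit p x)) = (\<Sum>C\<in>Cs. card C * g C)"
proof -
  have "(\<Sum>x\<in>S. g (orbit p x)) = (\<Sum>x\<in>\<Union>Cs. g (orbit p x))" using Union_Cs by simp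
  also have "\<dots> = (\<Sum>C\<in>Cs. \<Sum>x\<in>C. g (orbit p x))"
    by (subst sum.Union_disjoint) (auto simp: Cs_fin dest: Cs_disj)
  also have "\<dots> = (\<Sum>C\<in>Cs. card C * g C)"
  proof (rule sum.cong[OF refl])
    fix C assume C: "C \<in> Cs"
    have "(\<Sum>x\<in>C. g (orbit p x)) = (\<Sum>x\<in>C. g C)"
      by (rule sum.cong[OF refl]) (use cyc[OF C] in auto)
    then show "(\<Sum>x\<in>C. g (orbit p x)) = card C * g C" by simp
  qed
  finally show ?thesis .
qed

lemma card_N3:
  assumes r: "r \<ge> 1"
  shows "card (N3 n r p) = (\<Sum>C\<in>Cs. card C * (\<Sum>k\<in>{2..<card C}. card {F. F \<subseteq> Cs - {C} \<and> sum card F + k = r}))"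
proof -
  have "card (N3 n r p) = card (T3 r)" using N3_img[OF r] card_image by metis
  also have "\<dots> = (\<Sum>x\<in>S. \<Sum>k\<in>{2..<lc x}. card {U \<in> Cl. U \<inter> orbit p x = {} \<and> card U + k = r})"
    unfolding T3_def
    by (subst card_SigmaI) (auto simp: finS intro!: finite_SigmaI sum.cong
         intro: finite_subset[of _ "Pow S"] simp: Cl_def finS)
  also have "\<dots> = (\<Sum>x\<in>S. \<Sum>k\<in>{2..<card (orbit p x)}. card {F. F \<subseteq> Cs - {orbit p x} \<and> sum card F + k = r})"
  proof (rule sum.cong[OF refl])
    fix x assume xS: "x \<in> S"
    let ?C = "orbit p x"
    have CCs: "?C \<in> Cs" using orb_Cs[OF xS] .
    have Y: "Cs - {?C} \<subseteq> Cs" by blast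
    have UY: "\<Union>(Cs - {?C}) = S - ?C"
    proof
      show "\<Union>(Cs - {?C}) \<subseteq> S - ?C" using Cs_sub Cs_disj CCs by blast
      show "S - ?C \<subseteq> \<Union>(Cs - {?C})" using Union_Cs by blast
    qed
    show "(\<Sum>k\<in>{2..<lc x}. card {U \<in> Cl. U \<inter> orbit p x = {} \<and> card U + k = r}) =
          (\<Sum>k\<in>{2..<card (orbit p x)}. card {F. F \<subseteq> Cs - {orbit p x} \<and> sum card F + k = r})"
    proof (rule sum.cong)
      show "{2..<lc x} = {2..<card (orbit p x)}" unfolding lc_def ..
      fix k
      have "{U \<in> Cl. U \<inter> ?C = {} \<and> card U + k = r} = {U \<in> Cl. U \<subseteq> \<Union>(Cs - {?C}) \<and> card U + k = r}"
        unfolding UY Cl_def by blast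
      then show "card {U \<in> Cl. U \<inter> ?C = {} \<and> card U + k = r} = card {F. F \<subseteq> Cs - {?C} \<and> sum card F + k = r}"
        using card_Cl_Pow[OF Y, of "\<lambda>c. c + k = r"] by simp
    qed
  qed
  also have "\<dots> = (\<Sum>C\<in>Cs. card C * (\<Sum>k\<in>{2..<card C}. card {F. F \<subseteq> Cs - {C} \<and> sum card F + k = r}))"
    by (rule sum_S_Cs)
  finally show ?thesis .
qed

end

fun cntl :: "nat list \<Rightarrow> int \<Rightarrow> nat" where
  "cntl [] m = (if m = 0 then 1 else 0)"
| "cntl (a # xs) m = cntl xs m + cntl xs (m - int a)"

lemma mset_extract:
  assumes f: "finite X" and e: "image_mset w (mset_set X) = add_mset a M"
  shows "\<exists>x\<in>X. w x = a \<and> image_mset w (mset_set (X - {x})) = M"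
proof -
  have "a \<in># image_mset w (mset_set X)" using e by simp
  then obtain x where x: "x \<in> X" "w x = a" using f by (auto simp: in_image_mset)
  have d: "mset_set (X - {x}) = mset_set X - {#x#}" using mset_set_Diff[OF f, of "{x}"] x by simp
  have sub: "{#x#} \<subseteq># mset_set X" using x f by simp
  have "image_mset w (mset_set X - {#x#}) = image_mset w (mset_set X) - {#w x#}"
    using image_mset_Diff[OF sub, of w] by simp
  then have "image_mset w (mset_set (X - {x})) = image_mset w (mset_set X) - {#w x#}"
    by (simp only: d)
  then show ?thesis using x e by auto
qed

declare of_nat_sum[simp del]

lemma cnt_lemma:
  "finite X \<Longrightarrow> image_mset w (mset_set X) = mset xs \<Longrightarrow>
     card {F. F \<subseteq> X \<and> int (sum w F) = m} = cntl xs m"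
proof (induction xs arbitrary: X m)
  case Nil
  have "image_mset w (mset_set X) = {#}" using Nil.prems(2) by (simp only: mset.simps)
  then have "mset_set X = {#}" by (simp only: image_mset_is_empty_iff)
  then have "X = {}" using Nil.prems(1) by (simp only: mset_set_empty_iff) blast
  then have "{F. F \<subseteq> X \<and> int (sum w F) = m} = (if m = 0 then {{}} else {})" by auto
  then show ?case by simp
next
  case (Cons a xs)
  have e: "image_mset w (mset_set X) = add_mset a (mset xs)" using Cons.prems(2) by simp
  obtain x where x: "x \<in> X" "w x = a" "image_mset w (mset_set (X - {x})) = mset xs"
    using mset_extract[OF Cons.prems(1) e] by blast
  let ?X = "X - {x}"
  have f: "finite ?X" using Cons.prems(1) by simp
  have split: "{F. F \<subseteq> X \<and> int (sum w F) = m} =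
      {F. F \<subseteq> ?X \<and> int (sum w F) = m} \<union> insert x ` {F. F \<subseteq> ?X \<and> int (sum w F) = m - int a}"
  proof (rule set_eqI, rule iffI)
    fix F assume F: "F \<in> {F. F \<subseteq> X \<and> int (sum w F) = m}"
    show "F \<in> {F. F \<subseteq> ?X \<and> int (sum w F) = m} \<union> insert x ` {F. F \<subseteq> ?X \<and> int (sum w F) = m - int a}"
    proof (cases "x \<in> F")
      case False then show ?thesis using F by auto
    next
      case True
      have fF: "finite (F - {x})" using F Cons.prems(1) finite_subset by blast
      have "sum w F = w x + sum w (F - {x})" using True fF
        by (metis finite_Diff2 fF insert_Diff sum.insert Diff_iff singletonI finite_insert)
      then have "F - {x} \<in> {F. F \<subseteq> ?X \<and> int (sum w F) = m - int a}" using F x by auto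
      moreover have "F = insert x (F - {x})" using True by blast
      ultimately show ?thesis by blast
    qed
  next
    fix F assume "F \<in> {F. F \<subseteq> ?X \<and> int (sum w F) = m} \<union> insert x ` {F. F \<subseteq> ?X \<and> int (sum w F) = m - int a}"
    then show "F \<in> {F. F \<subseteq> X \<and> int (sum w F) = m}"
    proof
      assume "F \<in> {F. F \<subseteq> ?X \<and> int (sum w F) = m}" then show ?thesis by auto
    next
      assume "F \<in> insert x ` {F. F \<subseteq> ?X \<and> int (sum w F) = m - int a}"
      then obtain G where G: "G \<subseteq> ?X" "int (sum w G) = m - int a" "F = insert x G" by blast
      have "finite G" using G f finite_subset by blast
      moreover have "x \<notin> G" using G(1) by blast
      ultimately have "sum w F = w x + sum w G" using G(3) by simp
      then show ?thesis using G x by auto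
    qed
  qed
  have disj: "{F. F \<subseteq> ?X \<and> int (sum w F) = m} \<inter> insert x ` {F. F \<subseteq> ?X \<and> int (sum w F) = m - int a} = {}"
    by auto
  have inj: "inj_on (insert x) {F. F \<subseteq> ?X \<and> int (sum w F) = m - int a}"
    by (rule inj_onI) blast
  have fin1: "finite {F. F \<subseteq> ?X \<and> int (sum w F) = m}" using f by simp
  have fin2: "finite {F. F \<subseteq> ?X \<and> int (sum w F) = m - int a}" using f by simp
  have "card {F. F \<subseteq> X \<and> int (sum w F) = m} =
      card {F. F \<subseteq> ?X \<and> int (sum w F) = m} + card {F. F \<subseteq> ?X \<and> int (sum w F) = m - int a}"
    unfolding split by (subst card_Un_disjoint) (use fin1 fin2 disj inj card_image in auto)
  then show ?case using Cons.IH[OF f x(3)] by simp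
qed

declare of_nat_sum[simp]

lemma bnm_pascal: "p \<ge> 0 \<Longrightarrow> bnm (p + 1) c = bnm p c + bnm p (c - 1)"
proof -
  assume p: "p \<ge> 0"
  consider "c < 0" | "c = 0" | "c > 0 \<and> c \<le> p" | "c = p + 1" | "c > p + 1" by linarith
  then show ?thesis
  proof cases
    case 3
    then obtain a b where ab: "p = int a" "c = int (Suc b)" using p
      by (metis int_nat_eq nat_0_less_mult_iff not_less0 not_less_zero zero_less_imp_eq_int Suc_pred' pos_int_cases)
    have e1: "p + 1 = int (Suc a)" using ab by simp
    have "bnm (p+1) c = (if int (Suc a) < 0 \<or> int (Suc b) < 0 \<or> int (Suc a) < int (Suc b) then 0
        else nat (int (Suc a)) choose nat (int (Suc b)))" unfolding bnm_def e1 ab(2) ..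
    also have "\<dots> = Suc a choose Suc b" using 3 ab by (simp only: nat_int) simp
    also have "\<dots> = (a choose b) + (a choose Suc b)" by simp
    finally have L: "bnm (p+1) c = (a choose b) + (a choose Suc b)" .
    have e2: "c - 1 = int b" using ab by simp
    have "bnm p c = (if int a < 0 \<or> int (Suc b) < 0 \<or> int a < int (Suc b) then 0
        else nat (int a) choose nat (int (Suc b)))" unfolding bnm_def ab ..
    also have "\<dots> = a choose Suc b" using 3 ab by (simp only: nat_int) simp
    finally have R1: "bnm p c = a choose Suc b" .
    have "bnm p (c - 1) = (if int a < 0 \<or> int b < 0 \<or> int a < int b then 0
        else nat (int a) choose nat (int b))" unfolding bnm_def e2 ab(1) ..
    also have "\<dots> = a choose b" using 3 ab by (simp only: nat_int) simp
    finally have R2: "bnm p (c-1) = a choose b" .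
    show ?thesis using L R1 R2 by simp
  next
    case 4
    then show ?thesis using p unfolding bnm_def by (simp add: nat_add_distrib)
  qed (use p in \<open>auto simp: bnm_def\<close>)
qed

lemma bnm_sym: "p \<ge> 0 \<Longrightarrow> bnm p c = bnm p (p - c)"
proof -
  assume p: "p \<ge> 0"
  show ?thesis
  proof (cases "c < 0 \<or> c > p")
    case True then show ?thesis unfolding bnm_def by auto
  next
    case False
    then have "nat (p - c) = nat p - nat c" using p by (simp add: nat_diff_distrib)
    then show ?thesis using False p unfolding bnm_def by (simp add: binomial_symmetric[symmetric] nat_le_eq_zle)
  qed
qed

definition "Rq q m = (if even m then bnm (int q) (m div 2) else 0)"

lemma cntl_rep: "cntl (replicate q 2) m = Rq q m"
proof (induction q arbitrary: m)
  case 0 then show ?case unfolding Rq_def bnm_def by auto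
next
  case (Suc q)
  have "cntl (replicate (Suc q) 2) m = Rq q m + Rq q (m - 2)" using Suc by simp
  also have "\<dots> = Rq (Suc q) m"
  proof (cases "even m")
    case True
    then have "(m - 2) div 2 = m div 2 - 1" by auto
    then show ?thesis using True bnm_pascal[of "int q" "m div 2"] unfolding Rq_def by (simp add: add.commute)
  next
    case False then show ?thesis unfolding Rq_def by simp
  qed
  finally show ?case .
qed


lemma sum_even: "even c \<Longrightarrow> (\<Sum>k\<in>{2..<2*a+2}. Rq q (c - int k)) = (\<Sum>i\<in>{1..a}. bnm (int q) (c div 2 - int i))"
proof (induction a)
  case 0 then show ?case by simp
next
  case (Suc a)
  have e: "2 * Suc a + 2 = Suc (Suc (2*a+2))" by simp
  have t1: "Rq q (c - int (2*a+2)) = bnm (int q) (c div 2 - int (Suc a))"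
  proof -
    have "even (c - int (2*a+2))" using Suc.prems by simp
    moreover have "(c - int (2*a+2)) div 2 = c div 2 - int (Suc a)" using Suc.prems by auto
    ultimately show ?thesis unfolding Rq_def by simp
  qed
  have t2: "Rq q (c - int (Suc (2*a+2))) = 0" using Suc.prems unfolding Rq_def by simp
  show ?case unfolding e using Suc t1 t2 by simp
qed

lemma sum_odd: "odd c \<Longrightarrow> (\<Sum>k\<in>{2..<2*a+2}. Rq q (c - int k)) = (\<Sum>i\<in>{1..a}. bnm (int q) ((c - 1) div 2 - int i))"
proof (induction a)
  case 0 then show ?case by simp
next
  case (Suc a)
  have e: "2 * Suc a + 2 = Suc (Suc (2*a+2))" by simp
  have t2: "Rq q (c - int (Suc (2*a+2))) = bnm (int q) ((c - 1) div 2 - int (Suc a))"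
  proof -
    have "even (c - int (Suc (2*a+2)))" using Suc.prems by simp
    moreover have "(c - int (Suc (2*a+2))) div 2 = (c - 1) div 2 - int (Suc a)" using Suc.prems by auto
    ultimately show ?thesis unfolding Rq_def by simp
  qed
  have t1: "Rq q (c - int (2*a+2)) = 0" using Suc.prems unfolding Rq_def by simp
  show ?case unfolding e using Suc t1 t2 by simp
qed


lemma Rq_ev: "even m \<Longrightarrow> Rq q m = bnm (int q) (m div 2)" unfolding Rq_def by simp
lemma Rq_od: "odd m \<Longrightarrow> Rq q m = 0" unfolding Rq_def by simp

lemma sum_shift1: "(\<Sum>i\<in>{1..Suc a}. (f i :: nat)) = f 1 + (\<Sum>i\<in>{1..a}. f (Suc i))"
  by (induction a) (auto simp: add.assoc)

lemma arith1:
  assumes r: "r = 2*t" and s: "2 \<le> s" "s \<le> r"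
  shows "cntl ((2*s-1) # replicate (r-s) 2) (int (r-1)) + cntl ((2*s-1) # replicate (r-s) 2) (int r)
    + (2*s-1) * (\<Sum>k\<in>{2..<2*s-1}. cntl (replicate (r-s) 2) (int r - int k))
    = 2 * bnm (int r - int s) (int t) + (2*s-1) * (\<Sum>i=1..s-1. bnm (int r - int s) (int t - int i))"
proof -
  obtain a where a: "s = a + 2" using s by (metis add.commute le_Suc_ex)
  define q where "q = r - s"
  have Q: "int q = int r - int s" using s q_def by simp
  have l: "2*s-1 = Suc (2*a+2)" using a by simp
  have sm: "(\<Sum>k\<in>{2..<2*s-1}. Rq q (int r - int k)) = (\<Sum>i\<in>{1..a}. bnm (int q) (int t - int i)) + bnm (int q) (int t - int (Suc a))"
  proof -
    have "(\<Sum>k\<in>{2..<2*s-1}. Rq q (int r - int k)) = (\<Sum>k\<in>{2..<2*a+2}. Rq q (int r - int k)) + Rq q (int r - int (2*a+2))"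
      unfolding l by simp
    also have "(\<Sum>k\<in>{2..<2*a+2}. Rq q (int r - int k)) = (\<Sum>i\<in>{1..a}. bnm (int q) (int r div 2 - int i))"
      by (rule sum_even) (simp add: r)
    also have "int r div 2 = int t" by (simp add: r)
    also have "Rq q (int r - int (2*a+2)) = bnm (int q) (int t - int (Suc a))"
      by (subst Rq_ev) (use r in auto)
    finally show ?thesis .
  qed
  have sm2: "(\<Sum>i=1..s-1. bnm (int q) (int t - int i)) = (\<Sum>i\<in>{1..a}. bnm (int q) (int t - int i)) + bnm (int q) (int t - int (Suc a))"
    using a by simp
  have t1: "Rq q (int (r-1)) = 0" by (rule Rq_od) (use r s in auto)
  have t2: "Rq q (int (r-1) - int (2*s-1)) = bnm (int q) (int t)"
  proof -
    have "Rq q (int (r-1) - int (2*s-1)) = bnm (int q) (int t - int s)" by (subst Rq_ev) (use r s in auto)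
    also have "\<dots> = bnm (int q) (int t)" using bnm_sym[of "int q" "int t - int s"] Q r by simp
    finally show ?thesis .
  qed
  have t3: "Rq q (int r) = bnm (int q) (int t)" by (subst Rq_ev) (use r in auto)
  have t4: "Rq q (int r - int (2*s-1)) = 0" by (rule Rq_od) (use r s in auto)
  show ?thesis unfolding q_def[symmetric] Q[symmetric] cntl.simps cntl_rep t1 t2 t3 t4 sm sm2
    by simp
qed

lemma arith2:
  assumes r: "r = 2*t+1" and s: "2 \<le> s" "s \<le> r"
  shows "cntl ((2*s-1) # replicate (r-s) 2) (int (r-1)) + cntl ((2*s-1) # replicate (r-s) 2) (int r)
    + (2*s-1) * (\<Sum>k\<in>{2..<2*s-1}. cntl (replicate (r-s) 2) (int r - int k))
    = 2 * bnm (int r - int s) (int t) + (2*s-1) * (\<Sum>i=1..s-2. bnm (int r - int s) (int t - int i))"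
proof -
  obtain a where a: "s = a + 2" using s by (metis add.commute le_Suc_ex)
  define q where "q = r - s"
  have Q: "int q = int r - int s" using s q_def by simp
  have l: "2*s-1 = Suc (2*a+2)" using a by simp
  have sm: "(\<Sum>k\<in>{2..<2*s-1}. Rq q (int r - int k)) = (\<Sum>i\<in>{1..a}. bnm (int q) (int t - int i))"
  proof -
    have "(\<Sum>k\<in>{2..<2*s-1}. Rq q (int r - int k)) = (\<Sum>k\<in>{2..<2*a+2}. Rq q (int r - int k)) + Rq q (int r - int (2*a+2))"
      unfolding l by simp
    also have "(\<Sum>k\<in>{2..<2*a+2}. Rq q (int r - int k)) = (\<Sum>i\<in>{1..a}. bnm (int q) ((int r - 1) div 2 - int i))"
      by (rule sum_odd) (simp add: r)
    also have "(int r - 1) div 2 = int t" by (simp add: r)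
    also have "Rq q (int r - int (2*a+2)) = 0"
      by (rule Rq_od) (use r in auto)
    finally show ?thesis by simp
  qed
  have sm2: "s - 2 = a" using a by simp
  have t1: "Rq q (int (r-1)) = bnm (int q) (int t)" by (subst Rq_ev) (use r s in auto)
  have t2: "Rq q (int (r-1) - int (2*s-1)) = 0" by (rule Rq_od) (use r s in auto)
  have t3: "Rq q (int r) = 0" by (rule Rq_od) (use r in auto)
  have t4: "Rq q (int r - int (2*s-1)) = bnm (int q) (int t)"
  proof -
    have "Rq q (int r - int (2*s-1)) = bnm (int q) (int t + 1 - int s)"
      by (subst Rq_ev) (use r s in \<open>auto simp: algebra_simps\<close>)
    also have "\<dots> = bnm (int q) (int t)" using bnm_sym[of "int q" "int t + 1 - int s"] Q r by simp
    finally show ?thesis .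
  qed
  show ?thesis unfolding q_def[symmetric] Q[symmetric] sm2 cntl.simps cntl_rep t1 t2 t3 t4 sm
    by simp
qed


lemma sum23: "(\<Sum>k\<in>{2..<3::nat}. (f k :: nat)) = f 2"
proof -
  have "{2..<3::nat} = {2}" by auto
  then show ?thesis by simp
qed

lemma arith3:
  assumes r: "r = 2*t" and s: "2 \<le> s" "s + 2 \<le> r"
  shows "cntl ((2*s) # 3 # replicate (r-s-2) 2) (int (r-1)) + cntl ((2*s) # 3 # replicate (r-s-2) 2) (int r)
    + ((2*s) * (\<Sum>k\<in>{2..<2*s}. cntl (3 # replicate (r-s-2) 2) (int r - int k))
       + 3 * (\<Sum>k\<in>{2..<3}. cntl ((2*s) # replicate (r-s-2) 2) (int r - int k)))
    = 2 * bnm (int r - int s) (int t) + 2 * (2*s + 1) * bnm (int r - int s - 2) (int t - 1)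
      + (2*s) * (\<Sum>i=1..s-2. bnm (int r - int s - 1) (int t - int i - 1))"
proof -
  obtain a where a: "s = a + 2" using s by (metis add.commute le_Suc_ex)
  define q where "q = r - s - 2"
  define Q where "Q = int q"
  have Q: "Q = int r - int s - 2" using s q_def Q_def by simp
  have Q0: "Q \<ge> 0" using Q_def by simp
  have t1: "t \<ge> 2" using r s by simp
  let ?b = "\<lambda>j. bnm Q (int t - j)"
  have e1: "Rq q (int (r-1)) = 0" by (rule Rq_od) (use r t1 in auto)
  have e2: "Rq q (int (r-1) - int 3) = ?b 2" unfolding Q_def by (subst Rq_ev) (use r t1 in \<open>auto simp: algebra_simps\<close>)
  have e3: "Rq q (int (r-1) - int (2*s)) = 0" by (rule Rq_od) (use r t1 in auto)
  have e4: "Rq q (int (r-1) - int (2*s) - int 3) = ?b 0"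
  proof -
    have "Rq q (int (r-1) - int (2*s) - int 3) = bnm Q (int t - 2 - int s)"
      unfolding Q_def by (subst Rq_ev) (use r t1 in \<open>auto simp: algebra_simps\<close>)
    also have "\<dots> = ?b 0" using bnm_sym[OF Q0, of "int t - 2 - int s"] Q r by simp
    finally show ?thesis .
  qed
  have e5: "Rq q (int r) = ?b 0" unfolding Q_def by (subst Rq_ev) (use r in \<open>auto simp: algebra_simps\<close>)
  have e6: "Rq q (int r - int 3) = 0" by (rule Rq_od) (use r in auto)
  have e7: "Rq q (int r - int (2*s)) = ?b 2"
  proof -
    have "Rq q (int r - int (2*s)) = bnm Q (int t - int s)"
      unfolding Q_def by (subst Rq_ev) (use r in \<open>auto simp: algebra_simps\<close>)
    also have "\<dots> = ?b 2" using bnm_sym[OF Q0, of "int t - int s"] Q r by simp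
    finally show ?thesis .
  qed
  have e8: "Rq q (int r - int (2*s) - int 3) = 0" by (rule Rq_od) (use r in auto)
  have e9: "Rq q (int r - int 2) = ?b 1" unfolding Q_def by (subst Rq_ev) (use r t1 in \<open>auto simp: algebra_simps\<close>)
  have e10: "Rq q (int r - int 2 - int (2*s)) = ?b 1"
  proof -
    have "Rq q (int r - int 2 - int (2*s)) = bnm Q (int t - 1 - int s)"
      unfolding Q_def by (subst Rq_ev) (use r in \<open>auto simp: algebra_simps\<close>)
    also have "\<dots> = ?b 1" using bnm_sym[OF Q0, of "int t - 1 - int s"] Q r by simp
    finally show ?thesis .
  qed
  have ss: "2*s = 2*(Suc a) + 2" using a by simp
  have S1: "(\<Sum>k\<in>{2..<2*s}. Rq q (int r - int k)) = ?b 1 + (\<Sum>i\<in>{1..a}. ?b (int i + 1))"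
  proof -
    have "(\<Sum>k\<in>{2..<2*s}. Rq q (int r - int k)) = (\<Sum>i\<in>{1..Suc a}. bnm (int q) (int r div 2 - int i))"
      unfolding ss by (rule sum_even) (simp add: r)
    also have "\<dots> = (\<Sum>i\<in>{1..Suc a}. ?b (int i))" using r Q_def by simp
    also have "\<dots> = ?b 1 + (\<Sum>i\<in>{1..a}. ?b (int (Suc i)))"
      using sum_shift1[of "\<lambda>i. ?b (int i)" a] by simp
    also have "(\<Sum>i\<in>{1..a}. ?b (int (Suc i))) = (\<Sum>i\<in>{1..a}. ?b (int i + 1))" by (simp add: add.commute)
    finally show ?thesis .
  qed
  have S2: "(\<Sum>k\<in>{2..<2*s}. Rq q (int r - int k - int 3)) = (\<Sum>i\<in>{1..a}. ?b (int i + 2)) + ?b 1"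
  proof -
    have "(\<Sum>k\<in>{2..<2*s}. Rq q (int r - int k - int 3)) = (\<Sum>k\<in>{2..<2*s}. Rq q ((int r - 3) - int k))"
      by (rule sum.cong) (simp_all add: algebra_simps)
    also have "\<dots> = (\<Sum>i\<in>{1..Suc a}. bnm (int q) ((int r - 3 - 1) div 2 - int i))"
      unfolding ss by (rule sum_odd) (simp add: r)
    also have "\<dots> = (\<Sum>i\<in>{1..Suc a}. ?b (int i + 2))" using r Q_def
      by (intro sum.cong) (auto simp: algebra_simps)
    also have "\<dots> = (\<Sum>i\<in>{1..a}. ?b (int i + 2)) + ?b (int (Suc a) + 2)" by simp
    also have "?b (int (Suc a) + 2) = ?b 1"
      using bnm_sym[OF Q0, of "int t - (int (Suc a) + 2)"] Q r a by simp
    finally show ?thesis .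
  qed
  have S3: "(\<Sum>i=1..s-2. bnm (int r - int s - 1) (int t - int i - 1))
      = (\<Sum>i\<in>{1..a}. ?b (int i + 1)) + (\<Sum>i\<in>{1..a}. ?b (int i + 2))"
  proof -
    have "(\<Sum>i=1..s-2. bnm (int r - int s - 1) (int t - int i - 1)) = (\<Sum>i\<in>{1..a}. bnm (Q + 1) (int t - int i - 1))"
      using a Q by simp
    also have "\<dots> = (\<Sum>i\<in>{1..a}. ?b (int i + 1) + ?b (int i + 2))"
    proof (rule sum.cong[OF refl])
      fix i
      have e: "bnm (Q+1) (int t - (int i + 1)) = bnm Q (int t - (int i + 1)) + bnm Q (int t - (int i + 1) - 1)"
        by (rule bnm_pascal[OF Q0])
      have f1: "int t - int i - 1 = int t - (int i + 1)" and f3: "int t - (int i + 1) - 1 = int t - (int i + 2)"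
        by simp_all
      show "bnm (Q + 1) (int t - int i - 1) = ?b (int i + 1) + ?b (int i + 2)"
        by (metis e f1 f3)
    qed
    finally show ?thesis by (simp add: sum.distrib)
  qed
  have P: "bnm (int r - int s) (int t) = ?b 0 + 2 * ?b 1 + ?b 2"
  proof -
    have "int r - int s = (Q + 1) + 1" using Q by simp
    then have "bnm (int r - int s) (int t) = bnm (Q+1) (int t) + bnm (Q+1) (int t - 1)"
      using bnm_pascal[of "Q+1"] Q0 by simp
    also have "\<dots> = ?b 0 + 2 * ?b 1 + ?b 2" using bnm_pascal[OF Q0] by (simp add: algebra_simps)
    finally show ?thesis .
  qed
  have Qr: "int r - int s - 2 = Q" using Q by simp
  have L: "cntl ((2*s) # 3 # replicate (r-s-2) 2) (int (r-1)) + cntl ((2*s) # 3 # replicate (r-s-2) 2) (int r)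
    + ((2*s) * (\<Sum>k\<in>{2..<2*s}. cntl (3 # replicate (r-s-2) 2) (int r - int k))
       + 3 * (\<Sum>k\<in>{2..<3}. cntl ((2*s) # replicate (r-s-2) 2) (int r - int k)))
    = (?b 2 + ?b 0) + (?b 0 + ?b 2) + ((2*s) * ((?b 1 + (\<Sum>i\<in>{1..a}. ?b (int i + 1))) + ((\<Sum>i\<in>{1..a}. ?b (int i + 2)) + ?b 1))
       + 3 * (?b 1 + ?b 1))"
    unfolding q_def[symmetric] cntl.simps cntl_rep e1 e2 e3 e4 e5 e6 e7 e8 sum.distrib S1 S2 sum23 e9 e10
    by simp
  show ?thesis unfolding L S3 P Qr by (simp add: algebra_simps)
qed


lemma arith4:
  assumes r: "r = 2*t+1" and s: "2 \<le> s" "s + 2 \<le> r"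
  shows "cntl ((2*s) # 3 # replicate (r-s-2) 2) (int (r-1)) + cntl ((2*s) # 3 # replicate (r-s-2) 2) (int r)
    + ((2*s) * (\<Sum>k\<in>{2..<2*s}. cntl (3 # replicate (r-s-2) 2) (int r - int k))
       + 3 * (\<Sum>k\<in>{2..<3}. cntl ((2*s) # replicate (r-s-2) 2) (int r - int k)))
    = 2 * bnm (int r - int s - 1) (int t) + (2*s) * (\<Sum>i=1..s-1. bnm (int r - int s - 1) (int t - int i))"
proof -
  obtain a where a: "s = a + 2" using s by (metis add.commute le_Suc_ex)
  define q where "q = r - s - 2"
  define Q where "Q = int q"
  have Q: "Q = int r - int s - 2" using s q_def Q_def by simp
  have Q0: "Q \<ge> 0" using Q_def by simp
  have t1: "t \<ge> 2" using r s by simp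
  let ?b = "\<lambda>j. bnm Q (int t - j)"
  have e1: "Rq q (int (r-1)) = ?b 0" unfolding Q_def by (subst Rq_ev) (use r t1 in \<open>auto simp: algebra_simps\<close>)
  have e2: "Rq q (int (r-1) - int 3) = 0" by (rule Rq_od) (use r t1 in auto)
  have e3: "Rq q (int (r-1) - int (2*s)) = ?b 1"
  proof -
    have "Rq q (int (r-1) - int (2*s)) = bnm Q (int t - int s)"
      unfolding Q_def by (subst Rq_ev) (use r t1 in \<open>auto simp: algebra_simps\<close>)
    also have "\<dots> = ?b 1" using bnm_sym[OF Q0, of "int t - int s"] Q r by simp
    finally show ?thesis .
  qed
  have e4: "Rq q (int (r-1) - int (2*s) - int 3) = 0" by (rule Rq_od) (use r t1 in auto)
  have e5: "Rq q (int r) = 0" by (rule Rq_od) (use r in auto)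
  have e6: "Rq q (int r - int 3) = ?b 1" unfolding Q_def by (subst Rq_ev) (use r t1 in \<open>auto simp: algebra_simps\<close>)
  have e7: "Rq q (int r - int (2*s)) = 0" by (rule Rq_od) (use r in auto)
  have e8: "Rq q (int r - int (2*s) - int 3) = ?b 0"
  proof -
    have "Rq q (int r - int (2*s) - int 3) = bnm Q (int t - 1 - int s)"
      unfolding Q_def by (subst Rq_ev) (use r in \<open>auto simp: algebra_simps\<close>)
    also have "\<dots> = ?b 0" using bnm_sym[OF Q0, of "int t - 1 - int s"] Q r by simp
    finally show ?thesis .
  qed
  have e9: "Rq q (int r - int 2) = 0" by (rule Rq_od) (use r in auto)
  have e10: "Rq q (int r - int 2 - int (2*s)) = 0" by (rule Rq_od) (use r in auto)
  have ss: "2*s = 2*(Suc a) + 2" using a by simp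
  have S1: "(\<Sum>k\<in>{2..<2*s}. Rq q (int r - int k)) = (\<Sum>i\<in>{1..Suc a}. ?b (int i))"
  proof -
    have "(\<Sum>k\<in>{2..<2*s}. Rq q (int r - int k)) = (\<Sum>i\<in>{1..Suc a}. bnm (int q) ((int r - 1) div 2 - int i))"
      unfolding ss by (rule sum_odd) (simp add: r)
    also have "\<dots> = (\<Sum>i\<in>{1..Suc a}. ?b (int i))" using r Q_def by simp
    finally show ?thesis .
  qed
  have S2: "(\<Sum>k\<in>{2..<2*s}. Rq q (int r - int k - int 3)) = (\<Sum>i\<in>{1..Suc a}. ?b (int i + 1))"
  proof -
    have "(\<Sum>k\<in>{2..<2*s}. Rq q (int r - int k - int 3)) = (\<Sum>k\<in>{2..<2*s}. Rq q ((int r - 3) - int k))"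
      by (rule sum.cong) (simp_all add: algebra_simps)
    also have "\<dots> = (\<Sum>i\<in>{1..Suc a}. bnm (int q) ((int r - 3) div 2 - int i))"
      unfolding ss by (rule sum_even) (simp add: r)
    also have "\<dots> = (\<Sum>i\<in>{1..Suc a}. ?b (int i + 1))" using r Q_def
      by (intro sum.cong) (auto simp: algebra_simps)
    finally show ?thesis .
  qed
  have S3: "(\<Sum>i=1..s-1. bnm (int r - int s - 1) (int t - int i))
      = (\<Sum>i\<in>{1..Suc a}. ?b (int i)) + (\<Sum>i\<in>{1..Suc a}. ?b (int i + 1))"
  proof -
    have "(\<Sum>i=1..s-1. bnm (int r - int s - 1) (int t - int i)) = (\<Sum>i\<in>{1..Suc a}. bnm (Q + 1) (int t - int i))"
      using a Q by simp
    also have "\<dots> = (\<Sum>i\<in>{1..Suc a}. ?b (int i) + ?b (int i + 1))"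
    proof (rule sum.cong[OF refl])
      fix i
      have e: "bnm (Q+1) (int t - int i) = bnm Q (int t - int i) + bnm Q (int t - int i - 1)"
        by (rule bnm_pascal[OF Q0])
      have f3: "int t - int i - 1 = int t - (int i + 1)" by simp
      show "bnm (Q + 1) (int t - int i) = ?b (int i) + ?b (int i + 1)"
        by (metis e f3)
    qed
    finally show ?thesis by (simp add: sum.distrib)
  qed
  have P: "bnm (int r - int s - 1) (int t) = ?b 0 + ?b 1"
  proof -
    have h: "int r - int s - 1 = Q + 1" using Q by simp
    show ?thesis unfolding h using bnm_pascal[OF Q0, of "int t"] by simp
  qed
  have L: "cntl ((2*s) # 3 # replicate (r-s-2) 2) (int (r-1)) + cntl ((2*s) # 3 # replicate (r-s-2) 2) (int r)
    + ((2*s) * (\<Sum>k\<in>{2..<2*s}. cntl (3 # replicate (r-s-2) 2) (int r - int k))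
       + 3 * (\<Sum>k\<in>{2..<3}. cntl ((2*s) # replicate (r-s-2) 2) (int r - int k)))
    = (?b 0 + 0 + (?b 1 + 0)) + (0 + ?b 1 + (0 + ?b 0))
      + ((2*s) * ((\<Sum>i\<in>{1..Suc a}. ?b (int i)) + (\<Sum>i\<in>{1..Suc a}. ?b (int i + 1))) + 3 * (0 + 0))"
    unfolding q_def[symmetric] cntl.simps cntl_rep e1 e2 e3 e4 e5 e6 e7 e8 sum.distrib S1 S2 sum23 e9 e10
    by simp
  show ?thesis unfolding L S3 P by (simp add: algebra_simps)
qed


lemma cnt_nat: "finite Y \<Longrightarrow> image_mset card (mset_set Y) = mset xs \<Longrightarrow>
   card {F. F \<subseteq> Y \<and> sum card F + k = r} = cntl xs (int r - int k)"
proof -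
  assume a: "finite Y" "image_mset card (mset_set Y) = mset xs"
  have "{F. F \<subseteq> Y \<and> sum card F + k = r} = {F. F \<subseteq> Y \<and> int (sum card F) = int r - int k}" by (auto simp del: of_nat_sum)
  then show ?thesis using cnt_lemma[OF a] by simp
qed

lemma cnt_nat0: "finite Y \<Longrightarrow> image_mset card (mset_set Y) = mset xs \<Longrightarrow>
   card {F. F \<subseteq> Y \<and> sum card F = m} = cntl xs (int m)"
proof -
  assume a: "finite Y" "image_mset card (mset_set Y) = mset xs"
  have "{F. F \<subseteq> Y \<and> sum card F = m} = {F. F \<subseteq> Y \<and> int (sum card F) = int m}" by (auto simp del: of_nat_sum)
  then show ?thesis using cnt_lemma[OF a] by simp
qed

context pctx begin

lemma N12_cnt: "image_mset card (mset_set Cs) = mset xs \<Longrightarrow>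
   card (N1 n r p) = cntl xs (int (r-1)) \<and> card (N2 n r p) = cntl xs (int r)"
  unfolding N1_def N2_def card_N12 using cnt_nat0[OF finCs] by simp

lemma cardS_M: "card S = sum_mset (image_mset card (mset_set Cs))"
  using sum_card_Cs sum_unfold_sum_mset by metis

lemma count1:
  assumes M: "image_mset card (mset_set Cs) = add_mset l (replicate_mset q 2)" and l: "l \<ge> 3" and r: "r \<ge> 1"
  shows "card (N1 n r p) + card (N2 n r p) + card (N3 n r p) =
     cntl (l # replicate q 2) (int (r-1)) + cntl (l # replicate q 2) (int r)
     + l * (\<Sum>k\<in>{2..<l}. cntl (replicate q 2) (int r - int k))"
proof -
  have N12: "card (N1 n r p) = cntl (l # replicate q 2) (int (r-1)) \<and> card (N2 n r p) = cntl (l # replicate q 2) (int r)"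
    by (rule N12_cnt) (simp add: M)
  obtain C0 where C0: "C0 \<in> Cs" "card C0 = l" "image_mset card (mset_set (Cs - {C0})) = replicate_mset q 2"
    using mset_extract[OF finCs M] by blast
  let ?f = "\<lambda>C. card C * (\<Sum>k\<in>{2..<card C}. card {F. F \<subseteq> Cs - {C} \<and> sum card F + k = r})"
  have rest: "?f C = 0" if "C \<in> Cs - {C0}" for C
  proof -
    have "card C \<in># image_mset card (mset_set (Cs - {C0}))" using that finCs by simp
    then have "card C = 2" using C0(3) by (simp split: if_splits)
    then show ?thesis by simp
  qed
  have "card (N3 n r p) = (\<Sum>C\<in>Cs. ?f C)" by (rule card_N3[OF r])
  also have "\<dots> = ?f C0 + (\<Sum>C\<in>Cs - {C0}. ?f C)" using sum.remove[OF finCs C0(1)] by blast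
  also have "(\<Sum>C\<in>Cs - {C0}. ?f C) = 0" by (rule sum.neutral) (use rest in blast)
  also have "?f C0 = l * (\<Sum>k\<in>{2..<l}. cntl (replicate q 2) (int r - int k))"
    using cnt_nat[of "Cs - {C0}" "replicate q 2"] finCs C0 by simp
  finally show ?thesis using N12 by simp
qed

lemma count2:
  assumes M: "image_mset card (mset_set Cs) = add_mset l (add_mset 3 (replicate_mset q 2))" and l: "l \<ge> 4" and r: "r \<ge> 1"
  shows "card (N1 n r p) + card (N2 n r p) + card (N3 n r p) =
     cntl (l # 3 # replicate q 2) (int (r-1)) + cntl (l # 3 # replicate q 2) (int r)
     + (l * (\<Sum>k\<in>{2..<l}. cntl (3 # replicate q 2) (int r - int k))
        + 3 * (\<Sum>k\<in>{2..<3}. cntl (l # replicate q 2) (int r - int k)))"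
proof -
  have N12: "card (N1 n r p) = cntl (l # 3 # replicate q 2) (int (r-1)) \<and> card (N2 n r p) = cntl (l # 3 # replicate q 2) (int r)"
    by (rule N12_cnt) (simp add: M)
  obtain C0 where C0: "C0 \<in> Cs" "card C0 = l" "image_mset card (mset_set (Cs - {C0})) = add_mset 3 (replicate_mset q 2)"
    using mset_extract[OF finCs M] by blast
  have M': "image_mset card (mset_set Cs) = add_mset 3 (add_mset l (replicate_mset q 2))"
    using M by (simp add: add_mset_commute)
  obtain C1 where C1: "C1 \<in> Cs" "card C1 = 3" "image_mset card (mset_set (Cs - {C1})) = add_mset l (replicate_mset q 2)"
    using mset_extract[OF finCs M'] by blast
  have ne: "C1 \<noteq> C0" using C0 C1 l by auto
  let ?f = "\<lambda>C. card C * (\<Sum>k\<in>{2..<card C}. card {F. F \<subseteq> Cs - {C} \<and> sum card F + k = r})"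
  have rest: "?f C = 0" if "C \<in> Cs - {C0} - {C1}" for C
  proof -
    have "card C \<in># image_mset card (mset_set (Cs - {C0}))" using that finCs by simp
    then have a: "card C = 3 \<or> card C = 2" using C0(3) by (auto split: if_splits)
    have "card C \<in># image_mset card (mset_set (Cs - {C1}))" using that finCs by simp
    then have b: "card C = l \<or> card C = 2" using C1(3) by (auto split: if_splits)
    have "card C = 2" using a b l by auto
    then show ?thesis by simp
  qed
  have C1r: "C1 \<in> Cs - {C0}" using C1 ne by blast
  have "card (N3 n r p) = (\<Sum>C\<in>Cs. ?f C)" by (rule card_N3[OF r])
  also have "\<dots> = ?f C0 + (\<Sum>C\<in>Cs - {C0}. ?f C)" using sum.remove[OF finCs C0(1)] by blast
  also have "(\<Sum>C\<in>Cs - {C0}. ?f C) = ?f C1 + (\<Sum>C\<in>Cs - {C0} - {C1}. ?f C)"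
    using sum.remove[OF _ C1r] finCs by blast
  also have "(\<Sum>C\<in>Cs - {C0} - {C1}. ?f C) = 0" by (rule sum.neutral) (use rest in blast)
  also have "?f C0 = l * (\<Sum>k\<in>{2..<l}. cntl (3 # replicate q 2) (int r - int k))"
    using cnt_nat[of "Cs - {C0}" "3 # replicate q 2"] finCs C0 by simp
  also have "?f C1 = 3 * (\<Sum>k\<in>{2..<3}. cntl (l # replicate q 2) (int r - int k))"
    using cnt_nat[of "Cs - {C1}" "l # replicate q 2"] finCs C1 by simp
  finally show ?thesis using N12 by simp
qed

end

theorem lemma14:
  fixes t r n s :: nat and \<pi> :: "nat \<Rightarrow> nat"
  assumes "t \<ge> 2" and "r = 2*t \<or> r = 2*t + 1" and "n \<ge> 2*r - 1"
    and "\<pi> \<in> Sym n"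
  shows "(2 \<le> s \<and> s \<le> r \<and>
           cycle_type n \<pi> = add_mset (2*s - 1) (replicate_mset (r - s) 2) \<longrightarrow>
          (let l = 2*s - 1 in
           card (ball_r n r \<pi> \<inter> ball_r n r id) = card (N1 n r \<pi>) + card (N2 n r \<pi>) + card (N3 n r \<pi>)
           \<and> card (N1 n r \<pi>) + card (N2 n r \<pi>) + card (N3 n r \<pi>) =
             (if r = 2*t then
                2 * bnm (int r - int s) (int t) + l * (\<Sum>i=1..s-1. bnm (int r - int s) (int t - int i))
              else
                2 * bnm (int r - int s) (int t) + l * (\<Sum>i=1..s-2. bnm (int r - int s) (int t - int i)))))
       \<and>
         (2 \<le> s \<and> s + 2 \<le> r \<and>
           cycle_type n \<pi> = add_mset (2*s) (add_mset 3 (replicate_mset (r - s - 2) 2)) \<longrightarrow>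
          (let l = 2*s in
           card (ball_r n r \<pi> \<inter> ball_r n r id) = card (N1 n r \<pi>) + card (N2 n r \<pi>) + card (N3 n r \<pi>)
           \<and> card (N1 n r \<pi>) + card (N2 n r \<pi>) + card (N3 n r \<pi>) =
             (if r = 2*t then
                2 * bnm (int r - int s) (int t) + 2 * (l + 1) * bnm (int r - int s - 2) (int t - 1)
                + l * (\<Sum>i=1..s-2. bnm (int r - int s - 1) (int t - int i - 1))
              else
                2 * bnm (int r - int s - 1) (int t) + l * (\<Sum>i=1..s-1. bnm (int r - int s - 1) (int t - int i)))))"
proof -
  interpret pctx n \<pi> using assms(4) by unfold_locales (simp add: Sym_def)
  have ct: "cycle_type n \<pi> = image_mset card (mset_set Cs)" unfolding cycle_type_def Cs_def ..
  have r1: "r \<ge> 1" using assms(1,2) by auto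
  show ?thesis
  proof (intro conjI impI)
    assume h: "2 \<le> s \<and> s \<le> r \<and> cycle_type n \<pi> = add_mset (2*s - 1) (replicate_mset (r - s) 2)"
    then have M: "image_mset card (mset_set Cs) = add_mset (2*s - 1) (replicate_mset (r - s) 2)" using ct by simp
    have cS0: "card S = (2*s - 1) + (r - s) * 2" using cardS_M M by simp
    have cS: "card S = 2*r - 1" using cS0 h by linarith
    have P1: "card (ball_r n r \<pi> \<inter> ball_r n r id) = card (N1 n r \<pi>) + card (N2 n r \<pi>) + card (N3 n r \<pi>)"
      by (rule part1[OF cS r1])
    have C: "card (N1 n r \<pi>) + card (N2 n r \<pi>) + card (N3 n r \<pi>) =
     cntl ((2*s-1) # replicate (r-s) 2) (int (r-1)) + cntl ((2*s-1) # replicate (r-s) 2) (int r)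
     + (2*s-1) * (\<Sum>k\<in>{2..<2*s-1}. cntl (replicate (r-s) 2) (int r - int k))"
      by (rule count1[OF M _ r1]) (use h in linarith)
    show "let l = 2*s - 1 in
           card (ball_r n r \<pi> \<inter> ball_r n r id) = card (N1 n r \<pi>) + card (N2 n r \<pi>) + card (N3 n r \<pi>)
           \<and> card (N1 n r \<pi>) + card (N2 n r \<pi>) + card (N3 n r \<pi>) =
             (if r = 2*t then
                2 * bnm (int r - int s) (int t) + l * (\<Sum>i=1..s-1. bnm (int r - int s) (int t - int i))
              else
                2 * bnm (int r - int s) (int t) + l * (\<Sum>i=1..s-2. bnm (int r - int s) (int t - int i)))"
      unfolding Let_def
    proof (intro conjI)
      show "card (ball_r n r \<pi> \<inter> ball_r n r id) = card (N1 n r \<pi>) + card (N2 n r \<pi>) + card (N3 n r \<pi>)" by (rule P1)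
      show "card (N1 n r \<pi>) + card (N2 n r \<pi>) + card (N3 n r \<pi>) =
             (if r = 2*t then
                2 * bnm (int r - int s) (int t) + (2*s-1) * (\<Sum>i=1..s-1. bnm (int r - int s) (int t - int i))
              else
                2 * bnm (int r - int s) (int t) + (2*s-1) * (\<Sum>i=1..s-2. bnm (int r - int s) (int t - int i)))"
      proof (cases "r = 2*t")
        case True then show ?thesis unfolding C using arith1[OF True] h by simp
      next
        case False
        then have "r = 2*t+1" using assms(2) by simp
        then show ?thesis unfolding C using arith2 h False by simp
      qed
    qed
  next
    assume h: "2 \<le> s \<and> s + 2 \<le> r \<and> cycle_type n \<pi> = add_mset (2*s) (add_mset 3 (replicate_mset (r - s - 2) 2))"
    then have M: "image_mset card (mset_set Cs) = add_mset (2*s) (add_mset 3 (replicate_mset (r - s - 2) 2))" using ct by simp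
    have cS0: "card S = 2*s + (3 + (r - s - 2) * 2)" using cardS_M M by simp
    have cS: "card S = 2*r - 1" using cS0 h by linarith
    have P1: "card (ball_r n r \<pi> \<inter> ball_r n r id) = card (N1 n r \<pi>) + card (N2 n r \<pi>) + card (N3 n r \<pi>)"
      by (rule part1[OF cS r1])
    have C: "card (N1 n r \<pi>) + card (N2 n r \<pi>) + card (N3 n r \<pi>) =
     cntl ((2*s) # 3 # replicate (r-s-2) 2) (int (r-1)) + cntl ((2*s) # 3 # replicate (r-s-2) 2) (int r)
     + ((2*s) * (\<Sum>k\<in>{2..<2*s}. cntl (3 # replicate (r-s-2) 2) (int r - int k))
        + 3 * (\<Sum>k\<in>{2..<3}. cntl ((2*s) # replicate (r-s-2) 2) (int r - int k)))"
      by (rule count2[OF M _ r1]) (use h in linarith)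
    show "let l = 2*s in
           card (ball_r n r \<pi> \<inter> ball_r n r id) = card (N1 n r \<pi>) + card (N2 n r \<pi>) + card (N3 n r \<pi>)
           \<and> card (N1 n r \<pi>) + card (N2 n r \<pi>) + card (N3 n r \<pi>) =
             (if r = 2*t then
                2 * bnm (int r - int s) (int t) + 2 * (l + 1) * bnm (int r - int s - 2) (int t - 1)
                + l * (\<Sum>i=1..s-2. bnm (int r - int s - 1) (int t - int i - 1))
              else
                2 * bnm (int r - int s - 1) (int t) + l * (\<Sum>i=1..s-1. bnm (int r - int s - 1) (int t - int i)))"
      unfolding Let_def
    proof (intro conjI)
      show "card (ball_r n r \<pi> \<inter> ball_r n r id) = card (N1 n r \<pi>) + card (N2 n r \<pi>) + card (N3 n r \<pi>)" by (rule P1)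
      show "card (N1 n r \<pi>) + card (N2 n r \<pi>) + card (N3 n r \<pi>) =
             (if r = 2*t then
                2 * bnm (int r - int s) (int t) + 2 * (2*s + 1) * bnm (int r - int s - 2) (int t - 1)
                + (2*s) * (\<Sum>i=1..s-2. bnm (int r - int s - 1) (int t - int i - 1))
              else
                2 * bnm (int r - int s - 1) (int t) + (2*s) * (\<Sum>i=1..s-1. bnm (int r - int s - 1) (int t - int i)))"
      proof (cases "r = 2*t")
        case True then show ?thesis unfolding C using arith3[OF True] h by simp
      next
        case False
        then have "r = 2*t+1" using assms(2) by simp
        then show ?thesis unfolding C using arith4 h False by simp
      qed
    qed
  qed
qed

end
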